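(* Let $n\in\mathbb{N}$ and $\lambda\in\mathbb{R}^n$. Then \[\sum_{P\in\mathcal{P}_{ord}(\lambda)}(-1)^{|P|}\varepsilon(P)\varepsilon'(P)=(-1)^n\sum_{p\in\mathcal{P}^0_{\le2}(n)}\varepsilon(p)c(p,\lambda).\]
   Context: Partitions of $\{1,\dots,n\}$ are unordered sets $p=\{I_\alpha\}_{\alpha\in A}$ of nonempty disjoint subsets with union $\{1,\dots,n\}$; ordered partitions are sequences $P=(I_1,\dots,I_k)$ of such; $|P|=k$; each ordered partition has an underlying partition. $s_J(\lambda)=\sum_{i\in J}\lambda_i$; $\mathcal{P}_{ord}(\lambda)$ is the set of ordered partitions with $s_{I_1}(\lambda)+\dots+s_{I_i}(\lambda)>0$ for all $i$. For $P=(I_1,\dots,I_k)$ with $n_i=|I_i|$, $\sigma_P\in\mathfrak{S}_n$ is the unique permutation such that for each $i\in\{0,\dots,k-1\}$, $\sigma_P^{-1}$ maps $\{n_1+\dots+n_i+1,\dots,n_1+\dots+n_{i+1}\}$ increasingly onto $I_{i+1}$, and $\varepsilon(P)=\mathrm{sgn}(\sigma_P)$. For a partition $p=\{I_\alpha\}$, $\varepsilon'(p)=(-1)^{\frac12\sum_\alpha|I_\alpha|(|I_\alpha|-1)}$, and $\varepsilon'(P)$ is $\varepsilon'$ of the underlying partition. $\mathcal{P}^0(n)$ is the set of partitions having at most one block of odd cardinality; for $p\in\mathcal{P}^0(n)$, $\varepsilon(P)$ is the same for all orderings $P$ of $p$ and is denoted $\varepsilon(p)$. $\mathcal{P}^0_{\le2}(n)$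 is the set of $p\in\mathcal{P}^0(n)$ all of whose blocks have cardinality $\le2$. Define $c_1(a)=1$ if $a>0$, $0$ otherwise; $c_2(a,b)=0$ if $a+b\le0$ or $a\le0$, $=1$ if $a>0$ and $b>0$, $=2$ otherwise. For $p\in\mathcal{P}^0_{\le 2}(n)$, $c(p,\lambda)=\prod_\alpha c_{I_\alpha}(\lambda)$, where $c_{\{i\}}(\lambda)=c_1(\lambda_i)$ and $c_{\{i_1,i_2\}}(\lambda)=c_2(\lambda_{i_1},\lambda_{i_2})$ for $i_1<i_2$. *)

theory Defs
  imports Complex_Main "HOL-Combinatorics.Permutations"
begin

definition s_blk :: "nat set \<Rightarrow> (nat \<Rightarrow> real) \<Rightarrow> real" where
  "s_blk J lam = (\<Sum>i\<in>J. lam i)"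

definition is_partition :: "nat \<Rightarrow> nat set set \<Rightarrow> bool" where
  "is_partition n p \<longleftrightarrow> (\<forall>I\<in>p. I \<noteq> {}) \<and> (\<forall>I\<in>p. \<forall>J\<in>p. I \<noteq> J \<longrightarrow> I \<inter> J = {})
     \<and> \<Union>p = {1..n}"

definition is_ord_partition :: "nat \<Rightarrow> nat set list \<Rightarrow> bool" where
  "is_ord_partition n P \<longleftrightarrow> (\<forall>I\<in>set P. I \<noteq> {})
     \<and> (\<forall>i<length P. \<forall>j<length P. i \<noteq> j \<longrightarrow> P ! i \<inter> P ! j = {})
     \<and> \<Union>(set P) = {1..n}"

definition P_ord :: "nat \<Rightarrow> (nat \<Rightarrow> real) \<Rightarrow> nat set list set" where
  "P_ord n lam = {P. is_ord_partition n P \<and>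
     (\<forall>i. 1 \<le> i \<and> i \<le> length P \<longrightarrow> (\<Sum>J\<leftarrow>take i P. s_blk J lam) > 0)}"

(* sigma_P^{-1}: maps n_1+..+n_i+1 .. n_1+..+n_{i+1} increasingly onto I_{i+1};
   identity outside {1..n} *)
definition sigma_inv :: "nat \<Rightarrow> nat set list \<Rightarrow> nat \<Rightarrow> nat" where
  "sigma_inv n P = (\<lambda>j. if 1 \<le> j \<and> j \<le> n
        then concat (map sorted_list_of_set P) ! (j - 1) else j)"

definition sigma_P :: "nat \<Rightarrow> nat set list \<Rightarrow> nat \<Rightarrow> nat" where
  "sigma_P n P = inv (sigma_inv n P)"

definition eps_ord :: "nat \<Rightarrow> nat set list \<Rightarrow> int" where
  "eps_ord n P = sign (sigma_P n P)"

definition eps' :: "nat set set \<Rightarrow> int" where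
  "eps' p = (-1) ^ (\<Sum>I\<in>p. card I * (card I - 1) div 2)"

definition P0 :: "nat \<Rightarrow> nat set set set" where
  "P0 n = {p. is_partition n p \<and> card {I\<in>p. odd (card I)} \<le> 1}"

definition P0_le2 :: "nat \<Rightarrow> nat set set set" where
  "P0_le2 n = {p \<in> P0 n. \<forall>I\<in>p. card I \<le> 2}"

definition eps_part :: "nat \<Rightarrow> nat set set \<Rightarrow> int" where
  "eps_part n p = eps_ord n (SOME P. distinct P \<and> set P = p)"

definition c1 :: "real \<Rightarrow> int" where
  "c1 a = (if a > 0 then 1 else 0)"

definition c2 :: "real \<Rightarrow> real \<Rightarrow> int" where
  "c2 a b = (if a + b \<le> 0 \<or> a \<le> 0 then 0 else if a > 0 \<and> b > 0 then 1 else 2)"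

definition c_blk :: "nat set \<Rightarrow> (nat \<Rightarrow> real) \<Rightarrow> int" where
  "c_blk I lam = (if card I = 1 then c1 (lam (the_elem I))
                  else c2 (lam (Min I)) (lam (Max I)))"

definition c_part :: "nat set set \<Rightarrow> (nat \<Rightarrow> real) \<Rightarrow> int" where
  "c_part p lam = (\<Prod>I\<in>p. c_blk I lam)"

end

theory Submission
  imports Defs
begin

definition ninv :: "nat set \<Rightarrow> nat set \<Rightarrow> nat" where
  "ninv A B = card {(a,b). a \<in> A \<and> b \<in> B \<and> b < a}"

definition sg :: "nat set \<Rightarrow> nat set \<Rightarrow> int" where
  "sg A B = (-1) ^ ninv A B"

lemma finite_ninv_set: "finite A \<Longrightarrow> finite B \<Longrightarrow> finite {(a,b). a \<in> A \<and> b \<in> B \<and> b < a}"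
  by (rule finite_subset[of _ "A \<times> B"]) auto

lemma ninv_Un1:
  assumes "finite A" "finite B" "finite C" "A \<inter> B = {}"
  shows "ninv (A \<union> B) C = ninv A C + ninv B C"
proof -
  have e: "{(a,b). a \<in> A \<union> B \<and> b \<in> C \<and> b < a} = {(a,b). a \<in> A \<and> b \<in> C \<and> b < a} \<union> {(a,b). a \<in> B \<and> b \<in> C \<and> b < a}" by auto
  show ?thesis unfolding ninv_def e
    by (rule card_Un_disjoint) (use assms in \<open>auto intro: finite_ninv_set\<close>)
qed

lemma ninv_Un2:
  assumes "finite A" "finite B" "finite C" "B \<inter> C = {}"
  shows "ninv A (B \<union> C) = ninv A B + ninv A C"
proof -
  have e: "{(a,b). a \<in> A \<and> b \<in> B \<union> C \<and> b < a} = {(a,b). a \<in> A \<and> b \<in> B \<and> b < a} \<union> {(a,b). a \<in> A \<and> b \<in> C \<and> b < a}" by auto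
  show ?thesis unfolding ninv_def e
    by (rule card_Un_disjoint) (use assms in \<open>auto intro: finite_ninv_set\<close>)
qed

lemma sg_Un1: "finite A \<Longrightarrow> finite B \<Longrightarrow> finite C \<Longrightarrow> A \<inter> B = {} \<Longrightarrow> sg (A \<union> B) C = sg A C * sg B C"
  by (simp add: sg_def ninv_Un1 power_add)

lemma sg_Un2: "finite A \<Longrightarrow> finite B \<Longrightarrow> finite C \<Longrightarrow> B \<inter> C = {} \<Longrightarrow> sg A (B \<union> C) = sg A B * sg A C"
  by (simp add: sg_def ninv_Un2 power_add)

lemma ninv_single1: "ninv {x} B = card {b \<in> B. b < x}"
proof -
  have "{(a,b). a \<in> {x} \<and> b \<in> B \<and> b < a} = Pair x ` {b \<in> B. b < x}" by auto
  moreover have "inj_on (Pair x) {b \<in> B. b < x}" by (auto simp: inj_on_def)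
  ultimately show ?thesis unfolding ninv_def by (simp add: card_image)
qed

lemma ninv_single2: "ninv A {x} = card {a \<in> A. x < a}"
proof -
  have "{(a,b). a \<in> A \<and> b \<in> {x} \<and> b < a} = (\<lambda>a. (a,x)) ` {a \<in> A. x < a}" by auto
  moreover have "inj_on (\<lambda>a. (a,x)) {a \<in> A. x < a}" by (auto simp: inj_on_def)
  ultimately show ?thesis unfolding ninv_def by (simp add: card_image)
qed

lemma sg_single1: "sg {x} B = (-1) ^ card {b \<in> B. b < x}"
  by (simp add: sg_def ninv_single1)

lemma sg_single2: "sg A {x} = (-1) ^ card {a \<in> A. x < a}"
  by (simp add: sg_def ninv_single2)

lemma ninv_swap:
  assumes "finite A" "finite B" "A \<inter> B = {}"
  shows "ninv A B + ninv B A = card A * card B"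
proof -
  let ?X = "{(a,b). a \<in> A \<and> b \<in> B \<and> b < a}"
  let ?Y = "{(a,b). a \<in> A \<and> b \<in> B \<and> a < b}"
  have "?Y = (\<lambda>(b,a). (a,b)) ` {(b,a). b \<in> B \<and> a \<in> A \<and> a < b}" by auto
  moreover have "inj_on (\<lambda>(b,a). (a,b)) {(b,a). b \<in> B \<and> a \<in> A \<and> a < b}" by (auto simp: inj_on_def)
  ultimately have cY: "card ?Y = ninv B A" unfolding ninv_def by (simp add: card_image)
  have "A \<times> B = ?X \<union> ?Y" using assms(3) by (auto simp: linorder_neq_iff)
  moreover have "?X \<inter> ?Y = {}" by auto
  moreover have "finite ?X" "finite ?Y" by (rule finite_subset[of _ "A \<times> B"], auto simp: assms)+
  ultimately have "card (A \<times> B) = card ?X + card ?Y" by (simp add: card_Un_disjoint)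
  then show ?thesis using cY by (simp add: ninv_def card_cartesian_product)
qed

lemma sg_swap:
  assumes "finite A" "finite B" "A \<inter> B = {}"
  shows "sg A B * sg B A = (-1) ^ (card A * card B)"
  using ninv_swap[OF assms] by (simp add: sg_def power_add[symmetric])

lemma sg_sym:
  assumes "finite A" "finite B" "A \<inter> B = {}" "even (card A * card B)"
  shows "sg B A = sg A B"
proof -
  have "sg A B * sg B A = 1" using sg_swap[OF assms(1-3)] assms(4) by simp
  moreover have "sg A B * sg A B = 1" by (simp add: sg_def power_add[symmetric])
  ultimately show ?thesis
    by (metis mult.left_neutral mult.assoc mult.commute)
qed

lemma sg_empty1[simp]: "sg {} B = 1" by (simp add: sg_def ninv_def)
lemma sg_empty2[simp]: "sg A {} = 1" by (simp add: sg_def ninv_def)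

lemma sg_sq[simp]: "sg A B * sg A B = 1" by (simp add: sg_def power_add[symmetric])

definition conv :: "(nat set \<Rightarrow> int) \<Rightarrow> (nat set \<Rightarrow> int) \<Rightarrow> nat set \<Rightarrow> int" where
  "conv f g S = (\<Sum>T\<in>Pow S. sg T (S - T) * f T * g (S - T))"

lemma conv_infinite: "infinite S \<Longrightarrow> conv f g S = 0"
  by (simp add: conv_def)

lemma conv_assoc: "conv (conv f g) h S = conv f (conv g h) S"
proof (cases "finite S")
  case False then show ?thesis by (simp add: conv_infinite)
next
  case fin: True
  have "conv (conv f g) h S = (\<Sum>T\<in>Pow S. \<Sum>A\<in>{A \<in> Pow S. A \<subseteq> T}. sg A (T - A) * sg T (S - T) * f A * g (T - A) * h (S - T))"
    unfolding conv_def
  proof (rule sum.cong[OF refl])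
    fix T assume T: "T \<in> Pow S"
    have "{A \<in> Pow S. A \<subseteq> T} = Pow T" using T by auto
    then show "sg T (S - T) * (\<Sum>A\<in>Pow T. sg A (T - A) * f A * g (T - A)) * h (S - T) =
      (\<Sum>A\<in>{A \<in> Pow S. A \<subseteq> T}. sg A (T - A) * sg T (S - T) * f A * g (T - A) * h (S - T))"
      by (simp add: sum_distrib_left sum_distrib_right algebra_simps)
  qed
  also have "\<dots> = (\<Sum>A\<in>Pow S. \<Sum>T\<in>{T \<in> Pow S. A \<subseteq> T}. sg A (T - A) * sg T (S - T) * f A * g (T - A) * h (S - T))"
    by (rule sum.swap_restrict) (use fin in auto)
  also have "\<dots> = (\<Sum>A\<in>Pow S. \<Sum>B\<in>Pow (S - A). sg A (S - A) * sg B (S - A - B) * f A * g B * h (S - A - B))"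
  proof (rule sum.cong[OF refl])
    fix A assume A: "A \<in> Pow S"
    have img: "{T \<in> Pow S. A \<subseteq> T} = (\<lambda>B. A \<union> B) ` Pow (S - A)" using A by auto
    have inj: "inj_on (\<lambda>B. A \<union> B) (Pow (S - A))" by (auto simp: inj_on_def)
    show "(\<Sum>T\<in>{T \<in> Pow S. A \<subseteq> T}. sg A (T - A) * sg T (S - T) * f A * g (T - A) * h (S - T)) =
          (\<Sum>B\<in>Pow (S - A). sg A (S - A) * sg B (S - A - B) * f A * g B * h (S - A - B))"
      unfolding img sum.reindex[OF inj] o_def
    proof (rule sum.cong[OF refl])
      fix B assume B: "B \<in> Pow (S - A)"
      have fA: "finite A" "finite B" "finite (S - A - B)" using A B fin by (auto intro: finite_subset)
      have e1: "A \<union> B - A = B" using B by auto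
      have e2: "S - (A \<union> B) = S - A - B" by auto
      have e3: "S - A = B \<union> (S - A - B)" using B by auto
      have s1: "sg (A \<union> B) (S - A - B) = sg A (S - A - B) * sg B (S - A - B)"
        by (rule sg_Un1) (use fA B in auto)
      have s2: "sg A (S - A) = sg A B * sg A (S - A - B)"
      proof -
        have "sg A (B \<union> (S - A - B)) = sg A B * sg A (S - A - B)"
          by (rule sg_Un2) (use fA in auto)
        then show ?thesis by (simp only: e3[symmetric])
      qed
      show "sg A (A \<union> B - A) * sg (A \<union> B) (S - (A \<union> B)) * f A * g (A \<union> B - A) * h (S - (A \<union> B)) =
            sg A (S - A) * sg B (S - A - B) * f A * g B * h (S - A - B)"
        unfolding e1 e2 s1 s2 by (simp add: algebra_simps)
    qed
  qed
  also have "\<dots> = conv f (conv g h) S"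
    unfolding conv_def
    by (rule sum.cong[OF refl]) (simp add: sum_distrib_left sum_distrib_right algebra_simps)
  finally show ?thesis .
qed

lemma conv_assoc_fun: "conv (conv f g) h = conv f (conv g h)"
  by (rule ext) (rule conv_assoc)

lemma conv_compl: "conv f g S = (\<Sum>I\<in>Pow S. sg (S - I) I * f (S - I) * g I)"
proof -
  have inj: "inj_on (\<lambda>I. S - I) (Pow S)" by (auto simp: inj_on_def)
  have img: "(\<lambda>I. S - I) ` Pow S = Pow S" by auto
  have "conv f g S = (\<Sum>T\<in>(\<lambda>I. S - I) ` Pow S. sg T (S - T) * f T * g (S - T))"
    unfolding conv_def img ..
  also have "\<dots> = (\<Sum>I\<in>Pow S. sg (S - I) (S - (S - I)) * f (S - I) * g (S - (S - I)))"
    by (subst sum.reindex[OF inj]) (simp add: o_def)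
  also have "\<dots> = (\<Sum>I\<in>Pow S. sg (S - I) I * f (S - I) * g I)"
    by (rule sum.cong[OF refl]) (auto simp: double_diff)
  finally show ?thesis .
qed

lemma conv_comm_even:
  assumes ev: "\<And>U. f U \<noteq> 0 \<Longrightarrow> even (card U)"
  shows "conv f g S = conv g f S"
proof (cases "finite S")
  case False then show ?thesis by (simp add: conv_infinite)
next
  case fin: True
  have "conv g f S = (\<Sum>I\<in>Pow S. sg (S - I) I * g (S - I) * f I)" by (rule conv_compl)
  also have "\<dots> = conv f g S" unfolding conv_def
  proof (rule sum.cong[OF refl])
    fix I assume I: "I \<in> Pow S"
    show "sg (S - I) I * g (S - I) * f I = sg I (S - I) * f I * g (S - I)"
    proof (cases "f I = 0")
      case True then show ?thesis by simp
    next
      case False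
      then have "even (card I)" by (rule ev)
      then have "sg (S - I) I = sg I (S - I)"
        by (intro sg_sym) (use I fin in \<open>auto intro: finite_subset\<close>)
      then show ?thesis by simp
    qed
  qed
  finally show ?thesis by simp
qed

function W0 :: "(nat \<Rightarrow> nat \<Rightarrow> int) \<Rightarrow> nat set \<Rightarrow> int" where
  "W0 c S = (if S = {} then 1 else if infinite S then 0 else
     (\<Sum>y\<in>S - {Max S}. (-1) ^ card {z \<in> S - {Max S}. y < z} * c y (Max S) * W0 c (S - {Max S} - {y})))"
  by pat_completeness auto
termination
proof (relation "measure (\<lambda>(c,S). card S)")
  fix c S y
  assume a: "S \<noteq> {}" "\<not> infinite S" "y \<in> S - {Max S}"
  then have "S - {Max S} - {y} \<subset> S" by auto
  then have "card (S - {Max S} - {y}) < card S"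
    by (rule psubset_card_mono[rotated]) (use a in auto)
  then show "((c, S - {Max S} - {y}), c, S) \<in> measure (\<lambda>(c, S). card S)"
    by simp
qed auto

declare W0.simps[simp del]

lemma W0_empty[simp]: "W0 c {} = 1"
  by (simp add: W0.simps)

lemma W0_infinite: "infinite S \<Longrightarrow> W0 c S = 0"
  by (subst W0.simps) auto

lemma W0_ins:
  assumes "finite U" "\<forall>u\<in>U. u < x"
  shows "W0 c (insert x U) = (\<Sum>y\<in>U. (-1) ^ card {z \<in> U. y < z} * c y x * W0 c (U - {y}))"
proof -
  have m: "Max (insert x U) = x" using assms by (auto intro!: Max_eqI)
  have d: "insert x U - {x} = U" using assms by auto
  show ?thesis by (subst W0.simps) (simp add: m d assms)
qed

lemma W0_even: "W0 c S \<noteq> 0 \<Longrightarrow> finite S \<and> even (card S)"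
proof (induction "card S" arbitrary: S rule: less_induct)
  case less
  show ?case
  proof (cases "S = {}")
    case True then show ?thesis by simp
  next
    case ne: False
    have fin: "finite S" using less.prems W0_infinite by blast
    define x where "x = Max S"
    define U where "U = S - {x}"
    have xS: "x \<in> S" using Max_in[OF fin ne] by (simp add: x_def)
    have S: "S = insert x U" using xS by (auto simp: U_def)
    have fU: "finite U" using fin by (simp add: U_def)
    have lt: "\<forall>u\<in>U. u < x"
    proof
      fix u assume u: "u \<in> U"
      then have "u \<in> S" "u \<noteq> x" by (auto simp: U_def)
      moreover have "u \<le> x" using Max_ge[OF fin \<open>u \<in> S\<close>] by (simp add: x_def)
      ultimately show "u < x" by simp
    qed
    have "W0 c S = (\<Sum>y\<in>U. (-1) ^ card {z \<in> U. y < z} * c y x * W0 c (U - {y}))"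
      unfolding S by (rule W0_ins[OF fU lt])
    then obtain y where y: "y \<in> U" "W0 c (U - {y}) \<noteq> 0"
      using less.prems by (metis (no_types, lifting) mult_zero_right sum.neutral)
    have xU: "x \<notin> U" by (simp add: U_def)
    have cS: "card S = Suc (card U)" using S fU xU by simp
    have cU: "card (U - {y}) = card U - 1" using y fU by simp
    have "card (U - {y}) < card S" using cS cU y fU by (simp add: card_gt_0_iff)
    then have "even (card (U - {y}))" using less.hyps y(2) by blast
    moreover have "U \<noteq> {}" using y by auto
    then have "card U \<ge> 1" using fU by (simp add: Suc_le_eq card_gt_0_iff)
    ultimately have "even (card S)" using cS cU by (cases "card U") auto
    then show ?thesis using fin by simp
  qed
qed

lemma sum_swap1:
  assumes "finite U"
  shows "(\<Sum>T\<in>Pow U. \<Sum>y\<in>U - T. G T y) = (\<Sum>y\<in>U. \<Sum>T\<in>Pow (U - {y}). G T y)"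
proof -
  have "(\<Sum>T\<in>Pow U. \<Sum>y\<in>U - T. G T y) = (\<Sum>T\<in>Pow U. \<Sum>y\<in>{y \<in> U. y \<notin> T}. G T y)"
    by (rule sum.cong[OF refl]) (rule sum.cong, auto)
  also have "\<dots> = (\<Sum>y\<in>U. \<Sum>T\<in>{T \<in> Pow U. y \<notin> T}. G T y)"
    by (rule sum.swap_restrict) (use assms in auto)
  also have "\<dots> = (\<Sum>y\<in>U. \<Sum>T\<in>Pow (U - {y}). G T y)"
    by (rule sum.cong[OF refl]) (rule sum.cong, auto)
  finally show ?thesis .
qed

lemma sum_swap2:
  assumes "finite U"
  shows "(\<Sum>T\<in>Pow U. \<Sum>y\<in>T. G T y) = (\<Sum>y\<in>U. \<Sum>T\<in>Pow (U - {y}). G (insert y T) y)"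
proof -
  have "(\<Sum>T\<in>Pow U. \<Sum>y\<in>T. G T y) = (\<Sum>T\<in>Pow U. \<Sum>y\<in>{y \<in> U. y \<in> T}. G T y)"
    by (rule sum.cong[OF refl]) (rule sum.cong, auto)
  also have "\<dots> = (\<Sum>y\<in>U. \<Sum>T\<in>{T \<in> Pow U. y \<in> T}. G T y)"
    by (rule sum.swap_restrict) (use assms in auto)
  also have "\<dots> = (\<Sum>y\<in>U. \<Sum>T\<in>Pow (U - {y}). G (insert y T) y)"
  proof (rule sum.cong[OF refl])
    fix y assume y: "y \<in> U"
    have img: "{T \<in> Pow U. y \<in> T} = insert y ` Pow (U - {y})"
    proof
      show "{T \<in> Pow U. y \<in> T} \<subseteq> insert y ` Pow (U - {y})"
      proof
        fix T assume "T \<in> {T \<in> Pow U. y \<in> T}"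
        then have "T = insert y (T - {y})" "T - {y} \<in> Pow (U - {y})" by auto
        then show "T \<in> insert y ` Pow (U - {y})" by (metis imageI)
      qed
      show "insert y ` Pow (U - {y}) \<subseteq> {T \<in> Pow U. y \<in> T}" using y by auto
    qed
    have inj: "inj_on (insert y) (Pow (U - {y}))"
    proof (rule inj_onI)
      fix A B assume A: "A \<in> Pow (U - {y})" and B: "B \<in> Pow (U - {y})" and e: "insert y A = insert y B"
      then have "insert y A - {y} = insert y B - {y}" by simp
      then show "A = B" using A B by auto
    qed
    show "(\<Sum>T\<in>{T \<in> Pow U. y \<in> T}. G T y) = (\<Sum>T\<in>Pow (U - {y}). G (insert y T) y)"
      unfolding img by (subst sum.reindex[OF inj]) simp
  qed
  finally show ?thesis .
qed

lemma conv_empty[simp]: "conv f g {} = f {} * g {}"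
  by (simp add: conv_def)

lemma conv_max_split:
  assumes fU: "finite U" and lt: "\<forall>u\<in>U. u < x"
  shows "conv f g (insert x U) = (\<Sum>T\<in>Pow U. sg T (U - T) * f T * g (insert x (U - T)))
     + (\<Sum>T\<in>Pow U. (-1) ^ card (U - T) * sg T (U - T) * f (insert x T) * g (U - T))"
proof -
  have xU: "x \<notin> U" using lt by auto
  have P: "Pow (insert x U) = Pow U \<union> insert x ` Pow U" by (rule Pow_insert)
  have disj: "Pow U \<inter> insert x ` Pow U = {}" using xU by auto
  have inj: "inj_on (insert x) (Pow U)"
  proof (rule inj_onI)
    fix A B assume A: "A \<in> Pow U" and B: "B \<in> Pow U" and e: "insert x A = insert x B"
    then have "insert x A - {x} = insert x B - {x}" by simp
    then show "A = B" using A B xU by auto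
  qed
  have "conv f g (insert x U) = (\<Sum>T\<in>Pow U. sg T (insert x U - T) * f T * g (insert x U - T))
      + (\<Sum>T\<in>insert x ` Pow U. sg T (insert x U - T) * f T * g (insert x U - T))"
    unfolding conv_def P by (rule sum.union_disjoint) (use fU disj in auto)
  also have "(\<Sum>T\<in>Pow U. sg T (insert x U - T) * f T * g (insert x U - T))
      = (\<Sum>T\<in>Pow U. sg T (U - T) * f T * g (insert x (U - T)))"
  proof (rule sum.cong[OF refl])
    fix T assume T: "T \<in> Pow U"
    have e: "insert x U - T = {x} \<union> (U - T)" using T xU by auto
    have fT: "finite T" using T fU by (auto intro: finite_subset)
    have "sg T ({x} \<union> (U - T)) = sg T {x} * sg T (U - T)"
      by (rule sg_Un2) (use fT fU xU in auto)
    moreover have e0: "{a \<in> T. x < a} = {}"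
    proof -
      have "a < x" if "a \<in> T" for a using that T lt by auto
      then show ?thesis by (auto dest: less_asym)
    qed
    then have "sg T {x} = 1" unfolding sg_single2 e0 by simp
    ultimately have "sg T (insert x U - T) = sg T (U - T)" unfolding e by simp
    moreover have "insert x U - T = insert x (U - T)" using e by simp
    ultimately show "sg T (insert x U - T) * f T * g (insert x U - T) = sg T (U - T) * f T * g (insert x (U - T))"
      by simp
  qed
  also have "(\<Sum>T\<in>insert x ` Pow U. sg T (insert x U - T) * f T * g (insert x U - T))
      = (\<Sum>T\<in>Pow U. sg (insert x T) (insert x U - insert x T) * f (insert x T) * g (insert x U - insert x T))"
    using sum.reindex[OF inj, of "\<lambda>T. sg T (insert x U - T) * f T * g (insert x U - T)"] by (simp only: o_def)
  also have "\<dots> = (\<Sum>T\<in>Pow U. (-1) ^ card (U - T) * sg T (U - T) * f (insert x T) * g (U - T))"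
  proof (rule sum.cong[OF refl])
    fix T assume T: "T \<in> Pow U"
    have e: "insert x U - insert x T = U - T" using T xU by auto
    have fT: "finite T" using T fU by (auto intro: finite_subset)
    have "sg ({x} \<union> T) (U - T) = sg {x} (U - T) * sg T (U - T)"
      by (rule sg_Un1) (use fT fU xU T in auto)
    moreover have "{b \<in> U - T. b < x} = U - T" using lt by auto
    ultimately have "sg (insert x T) (U - T) = (-1) ^ card (U - T) * sg T (U - T)"
      by (simp add: sg_single1)
    then show "sg (insert x T) (insert x U - insert x T) * f (insert x T) * g (insert x U - insert x T) =
         (-1) ^ card (U - T) * sg T (U - T) * f (insert x T) * g (U - T)"
      by (simp add: e)
  qed
  finally show ?thesis .
qed

lemma neg1_eq: "even (a + b) \<Longrightarrow> (-1::int) ^ a = (-1) ^ b"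
  by (metis neg_one_even_power neg_one_odd_power odd_add)

lemma card_split_gt:
  fixes U :: "nat set"
  assumes "finite U" "T \<subseteq> U"
  shows "card {z \<in> U. y < z} = card {z \<in> U - T. y < z} + card {z \<in> T. y < z}"
proof -
  have "{z \<in> U. y < z} = {z \<in> U - T. y < z} \<union> {z \<in> T. y < z}" using assms by auto
  moreover have "finite {z \<in> U - T. y < z}" "finite {z \<in> T. y < z}" using assms by (auto intro: finite_subset)
  ultimately show ?thesis by (simp add: card_Un_disjoint disjoint_iff)
qed

lemma card_lt_gt:
  fixes V :: "nat set"
  assumes "finite V" "y \<notin> V"
  shows "card V = card {b \<in> V. b < y} + card {b \<in> V. y < b}"
proof -
  have "b < y \<or> y < b" if "b \<in> V" for b
  proof -
    have "b \<noteq> y" using assms(2) that by auto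
    then show ?thesis by auto
  qed
  then have "V = {b \<in> V. b < y} \<union> {b \<in> V. y < b}" by auto
  then have "card V = card ({b \<in> V. b < y} \<union> {b \<in> V. y < b})" by simp
  also have "\<dots> = card {b \<in> V. b < y} + card {b \<in> V. y < b}"
    by (rule card_Un_disjoint) (use assms in auto)
  finally show ?thesis .
qed

lemma m1_sq[simp]: "(-1::int) ^ a * (-1) ^ a = 1"
  by (induct a) auto

lemma W0_add: "conv (W0 c) (W0 c') S = W0 (\<lambda>y x. c y x + c' y x) S"
proof (induction "card S" arbitrary: S rule: less_induct)
  case less
  show ?case
  proof (cases "finite S")
    case False then show ?thesis by (simp add: conv_infinite W0_infinite)
  next
    case fin: True
    show ?thesis
    proof (cases "S = {}")
      case True then show ?thesis by simp
    next
      case ne: False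
      define x where "x = Max S"
      define U where "U = S - {x}"
      have xS: "x \<in> S" using Max_in[OF fin ne] by (simp add: x_def)
      have S: "S = insert x U" using xS by (auto simp: U_def)
      have fU: "finite U" using fin by (simp add: U_def)
      have xU: "x \<notin> U" by (simp add: U_def)
      have lt: "\<forall>u\<in>U. u < x"
      proof
        fix u assume u: "u \<in> U"
        then have "u \<in> S" "u \<noteq> x" by (auto simp: U_def)
        moreover have "u \<le> x" using Max_ge[OF fin \<open>u \<in> S\<close>] by (simp add: x_def)
        ultimately show "u < x" by simp
      qed
      define C where "C = conv (W0 c) (W0 c')"
      define k where "k y = card {z \<in> U. y < z}" for y
      have IH: "C (U - {y}) = W0 (\<lambda>y x. c y x + c' y x) (U - {y})" if y: "y \<in> U" for y
      proof -
        have "card (U - {y}) < card S" using S fU xU y by (simp add: card_Diff1_less less_SucI)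
        then show ?thesis unfolding C_def by (rule less.hyps)
      qed
      have A: "(\<Sum>T\<in>Pow U. sg T (U - T) * W0 c T * W0 c' (insert x (U - T)))
             = (\<Sum>y\<in>U. (-1) ^ k y * c' y x * C (U - {y}))"
      proof -
        have "(\<Sum>T\<in>Pow U. sg T (U - T) * W0 c T * W0 c' (insert x (U - T)))
           = (\<Sum>T\<in>Pow U. \<Sum>y\<in>U - T. sg T (U - T) * W0 c T * ((-1) ^ card {z \<in> U - T. y < z} * c' y x * W0 c' (U - T - {y})))"
        proof (rule sum.cong[OF refl])
          fix T assume T: "T \<in> Pow U"
          have "W0 c' (insert x (U - T)) = (\<Sum>y\<in>U - T. (-1) ^ card {z \<in> U - T. y < z} * c' y x * W0 c' (U - T - {y}))"
            by (rule W0_ins) (use fU lt in auto)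
          then show "sg T (U - T) * W0 c T * W0 c' (insert x (U - T)) =
            (\<Sum>y\<in>U - T. sg T (U - T) * W0 c T * ((-1) ^ card {z \<in> U - T. y < z} * c' y x * W0 c' (U - T - {y})))"
            by (simp add: sum_distrib_left)
        qed
        also have "\<dots> = (\<Sum>y\<in>U. \<Sum>T\<in>Pow (U - {y}). sg T (U - T) * W0 c T * ((-1) ^ card {z \<in> U - T. y < z} * c' y x * W0 c' (U - T - {y})))"
          by (rule sum_swap1[OF fU])
        also have "\<dots> = (\<Sum>y\<in>U. \<Sum>T\<in>Pow (U - {y}). (-1) ^ k y * c' y x * (sg T (U - {y} - T) * W0 c T * W0 c' (U - {y} - T)))"
        proof (rule sum.cong[OF refl], rule sum.cong[OF refl])
          fix y T assume y: "y \<in> U" and T: "T \<in> Pow (U - {y})"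
          have fT: "finite T" using T fU by (auto intro: finite_subset)
          have e1: "U - T = {y} \<union> (U - {y} - T)" using y T by auto
          have e2: "U - T - {y} = U - {y} - T" by auto
          have "sg T ({y} \<union> (U - {y} - T)) = sg T {y} * sg T (U - {y} - T)"
            by (rule sg_Un2) (use fT fU in auto)
          then have s: "sg T (U - T) = (-1) ^ card {a \<in> T. y < a} * sg T (U - {y} - T)"
            unfolding e1[symmetric] by (simp add: sg_single2)
          have kk: "k y = card {z \<in> U - T. y < z} + card {z \<in> T. y < z}"
            unfolding k_def by (rule card_split_gt) (use fU T in auto)
          have "(-1::int) ^ card {z \<in> U - T. y < z} * (-1) ^ card {a \<in> T. y < a} = (-1) ^ k y"
            unfolding kk by (simp add: power_add)
          then show "sg T (U - T) * W0 c T * ((-1) ^ card {z \<in> U - T. y < z} * c' y x * W0 c' (U - T - {y})) =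
             (-1) ^ k y * c' y x * (sg T (U - {y} - T) * W0 c T * W0 c' (U - {y} - T))"
            unfolding s e2 by (simp add: algebra_simps)
        qed
        also have "\<dots> = (\<Sum>y\<in>U. (-1) ^ k y * c' y x * C (U - {y}))"
          unfolding C_def conv_def by (simp add: sum_distrib_left)
        finally show ?thesis .
      qed
      have B: "(\<Sum>T\<in>Pow U. (-1) ^ card (U - T) * sg T (U - T) * W0 c (insert x T) * W0 c' (U - T))
             = (\<Sum>y\<in>U. (-1) ^ k y * c y x * C (U - {y}))"
      proof -
        have "(\<Sum>T\<in>Pow U. (-1) ^ card (U - T) * sg T (U - T) * W0 c (insert x T) * W0 c' (U - T))
           = (\<Sum>T\<in>Pow U. \<Sum>y\<in>T. (-1) ^ card (U - T) * sg T (U - T) * ((-1) ^ card {z \<in> T. y < z} * c y x * W0 c (T - {y})) * W0 c' (U - T))"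
        proof (rule sum.cong[OF refl])
          fix T assume T: "T \<in> Pow U"
          have "W0 c (insert x T) = (\<Sum>y\<in>T. (-1) ^ card {z \<in> T. y < z} * c y x * W0 c (T - {y}))"
            by (rule W0_ins) (use fU lt T in \<open>auto intro: finite_subset\<close>)
          then show "(-1) ^ card (U - T) * sg T (U - T) * W0 c (insert x T) * W0 c' (U - T) =
            (\<Sum>y\<in>T. (-1) ^ card (U - T) * sg T (U - T) * ((-1) ^ card {z \<in> T. y < z} * c y x * W0 c (T - {y})) * W0 c' (U - T))"
            by (simp add: sum_distrib_left sum_distrib_right)
        qed
        also have "\<dots> = (\<Sum>y\<in>U. \<Sum>T\<in>Pow (U - {y}). (-1) ^ card (U - insert y T) * sg (insert y T) (U - insert y T) * ((-1) ^ card {z \<in> insert y T. y < z} * c y x * W0 c (insert y T - {y})) * W0 c' (U - insert y T))"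
          by (rule sum_swap2[OF fU])
        also have "\<dots> = (\<Sum>y\<in>U. \<Sum>T\<in>Pow (U - {y}). (-1) ^ k y * c y x * (sg T (U - {y} - T) * W0 c T * W0 c' (U - {y} - T)))"
        proof (rule sum.cong[OF refl], rule sum.cong[OF refl])
          fix y T assume y: "y \<in> U" and T: "T \<in> Pow (U - {y})"
          define V where "V = U - {y}"
          have fT: "finite T" using T fU by (auto intro: finite_subset)
          have fV: "finite V" using fU by (simp add: V_def)
          have yT: "y \<notin> T" using T by auto
          have e1: "U - insert y T = V - T" by (auto simp: V_def)
          have e2: "insert y T - {y} = T" using yT by auto
          have e3: "{z \<in> insert y T. y < z} = {z \<in> T. y < z}" by auto
          have "sg ({y} \<union> T) (V - T) = sg {y} (V - T) * sg T (V - T)"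
            by (rule sg_Un1) (use fT fV yT in auto)
          then have s: "sg (insert y T) (V - T) = (-1) ^ card {b \<in> V - T. b < y} * sg T (V - T)"
            by (simp add: sg_single1)
          have c1: "card (V - T) = card {b \<in> V - T. b < y} + card {b \<in> V - T. y < b}"
            by (rule card_lt_gt) (use fV in \<open>auto simp: V_def\<close>)
          have kV: "k y = card {z \<in> V. y < z}" unfolding k_def V_def by (rule arg_cong[where f=card]) auto
          have c2: "card {z \<in> V. y < z} = card {z \<in> V - T. y < z} + card {z \<in> T. y < z}"
            by (rule card_split_gt) (use fV T in \<open>auto simp: V_def\<close>)
          have sgn: "(-1::int) ^ card (V - T) * (-1) ^ card {b \<in> V - T. b < y} * (-1) ^ card {z \<in> T. y < z} = (-1) ^ k y"
          proof -
            have "(-1::int) ^ card (V - T) * (-1) ^ card {b \<in> V - T. b < y} * (-1) ^ card {z \<in> T. y < z}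
              = ((-1) ^ card {b \<in> V - T. b < y} * (-1) ^ card {b \<in> V - T. b < y}) * ((-1) ^ card {b \<in> V - T. y < b} * (-1) ^ card {z \<in> T. y < z})"
              unfolding c1 by (simp add: power_add algebra_simps)
            also have "\<dots> = (-1) ^ k y" unfolding kV c2 by (simp add: power_add)
            finally show ?thesis .
          qed
          show "(-1) ^ card (U - insert y T) * sg (insert y T) (U - insert y T) * ((-1) ^ card {z \<in> insert y T. y < z} * c y x * W0 c (insert y T - {y})) * W0 c' (U - insert y T) =
             (-1) ^ k y * c y x * (sg T (U - {y} - T) * W0 c T * W0 c' (U - {y} - T))"
            unfolding e1 e2 e3 s V_def[symmetric] sgn[symmetric] by (simp add: algebra_simps)
        qed
        also have "\<dots> = (\<Sum>y\<in>U. (-1) ^ k y * c y x * C (U - {y}))"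
          unfolding C_def conv_def by (simp add: sum_distrib_left)
        finally show ?thesis .
      qed
      have "C S = (\<Sum>y\<in>U. (-1) ^ k y * c' y x * C (U - {y})) + (\<Sum>y\<in>U. (-1) ^ k y * c y x * C (U - {y}))"
        unfolding C_def S conv_max_split[OF fU lt] using A B by (simp add: C_def)
      also have "\<dots> = (\<Sum>y\<in>U. (-1) ^ k y * (c y x + c' y x) * W0 (\<lambda>y x. c y x + c' y x) (U - {y}))"
        by (simp add: sum.distrib[symmetric] IH algebra_simps cong: sum.cong)
      also have "\<dots> = W0 (\<lambda>y x. c y x + c' y x) S"
        unfolding S k_def by (rule W0_ins[symmetric]) (use fU lt in auto)
      finally show ?thesis by (simp add: C_def)
    qed
  qed
qed

lemma max_decomp:
  fixes S :: "nat set"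
  assumes "finite S" "S \<noteq> {}"
  shows "\<exists>x U. S = insert x U \<and> x \<notin> U \<and> finite U \<and> (\<forall>u\<in>U. u < x) \<and> card S = Suc (card U)"
proof -
  define x where "x = Max S"
  define U where "U = S - {x}"
  have xS: "x \<in> S" using Max_in[OF assms] by (simp add: x_def)
  have S: "S = insert x U" using xS by (auto simp: U_def)
  have fU: "finite U" using assms by (simp add: U_def)
  have xU: "x \<notin> U" by (simp add: U_def)
  have lt: "\<forall>u\<in>U. u < x"
  proof
    fix u assume u: "u \<in> U"
    then have "u \<in> S" "u \<noteq> x" by (auto simp: U_def)
    moreover have "u \<le> x" using Max_ge[OF assms(1) \<open>u \<in> S\<close>] by (simp add: x_def)
    ultimately show "u < x" by simp
  qed
  show ?thesis using S fU xU lt by (intro exI[of _ x] exI[of _ U]) simp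
qed

lemma card_SucD: "card S = Suc n \<Longrightarrow> finite S \<and> S \<noteq> {}"
  by (cases "finite S") auto

lemma card1_decomp:
  fixes S :: "nat set"
  assumes "card S = 1" shows "\<exists>a. S = {a}"
  using assms by (rule card_1_singletonE) auto

lemma card2_decomp:
  fixes S :: "nat set"
  assumes "card S = 2" shows "\<exists>a b. a < b \<and> S = {a, b}"
proof -
  have "finite S" "S \<noteq> {}" using card_SucD[of S 1] assms by simp_all
  then obtain x U where d: "S = insert x U" "x \<notin> U" "finite U" "\<forall>u\<in>U. u < x" "card S = Suc (card U)"
    using max_decomp[of S] by blast
  then have "card U = 1" using assms by simp
  then obtain a where "U = {a}" using card1_decomp by blast
  then show ?thesis using d by (intro exI[of _ a] exI[of _ x]) auto
qed

lemma card3_decomp: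
  fixes S :: "nat set"
  assumes "card S = 3" shows "\<exists>a b c. a < b \<and> b < c \<and> S = {a, b, c}"
proof -
  have "finite S" "S \<noteq> {}" using card_SucD[of S 2] assms by simp_all
  then obtain x U where d: "S = insert x U" "x \<notin> U" "finite U" "\<forall>u\<in>U. u < x" "card S = Suc (card U)"
    using max_decomp[of S] by blast
  then have "card U = 2" using assms by simp
  then obtain a b where "a < b" "U = {a, b}" using card2_decomp by blast
  then show ?thesis using d by (intro exI[of _ a] exI[of _ b] exI[of _ x]) auto
qed

lemma card4_decomp:
  fixes S :: "nat set"
  assumes "card S = 4" shows "\<exists>a b c d. a < b \<and> b < c \<and> c < d \<and> S = {a, b, c, d}"
proof -
  have "finite S" "S \<noteq> {}" using card_SucD[of S 3] assms by simp_all
  then obtain x U where d: "S = insert x U" "x \<notin> U" "finite U" "\<forall>u\<in>U. u < x" "card S = Suc (card U)"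
    using max_decomp[of S] by blast
  then have "card U = 3" using assms by simp
  then obtain a b c where "a < b" "b < c" "U = {a, b, c}" using card3_decomp by blast
  then show ?thesis using d by (intro exI[of _ a] exI[of _ b] exI[of _ c] exI[of _ x]) auto
qed

definition lin :: "(nat \<Rightarrow> int) \<Rightarrow> nat set \<Rightarrow> int" where
  "lin l S = (if S = {} then 1 else if card S = 1 then l (the_elem S) else 0)"

lemma lin_empty[simp]: "lin l {} = 1" by (simp add: lin_def)
lemma lin_single[simp]: "lin l {a} = l a" by (simp add: lin_def)
lemma lin_big: "card S \<ge> 2 \<Longrightarrow> lin l S = 0" by (auto simp: lin_def)

lemma conv_lin_right:
  assumes fin: "finite S"
  shows "conv f (lin l) S = f S + (\<Sum>a\<in>S. (-1) ^ card {z \<in> S. a < z} * l a * f (S - {a}))"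
proof -
  let ?G = "\<lambda>I. sg (S - I) I * f (S - I) * lin l I"
  have sub: "insert {} ((\<lambda>a. {a}) ` S) \<subseteq> Pow S" by auto
  have "conv f (lin l) S = (\<Sum>I\<in>Pow S. ?G I)" by (rule conv_compl)
  also have "\<dots> = (\<Sum>I\<in>insert {} ((\<lambda>a. {a}) ` S). ?G I)"
  proof -
    have Z: "\<forall>I\<in>Pow S - insert {} ((\<lambda>a. {a}) ` S). ?G I = 0"
    proof
      fix I assume I: "I \<in> Pow S - insert {} ((\<lambda>a. {a}) ` S)"
      then have "I \<noteq> {}" "\<forall>a. I \<noteq> {a}" by auto
      moreover have "finite I" using I fin by (auto intro: finite_subset)
      ultimately have "card I \<noteq> 1" "I \<noteq> {}" by (auto simp: card_1_singleton_iff)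
      then have "lin l I = 0" by (simp add: lin_def)
      then show "?G I = 0" by simp
    qed
    show ?thesis by (rule sum.mono_neutral_right[OF _ sub Z]) (use fin in simp)
  qed
  also have "\<dots> = ?G {} + (\<Sum>I\<in>(\<lambda>a. {a}) ` S. ?G I)"
    by (rule sum.insert) (use fin in auto)
  also have "(\<Sum>I\<in>(\<lambda>a. {a}) ` S. ?G I) = (\<Sum>a\<in>S. ?G {a})"
    by (rule sum.reindex_cong[where l="\<lambda>a. {a}"]) (auto simp: inj_on_def)
  also have "\<dots> = (\<Sum>a\<in>S. (-1) ^ card {z \<in> S. a < z} * l a * f (S - {a}))"
  proof (rule sum.cong[OF refl])
    fix a assume a: "a \<in> S"
    have "{z \<in> S - {a}. a < z} = {z \<in> S. a < z}" by auto
    then show "?G {a} = (-1) ^ card {z \<in> S. a < z} * l a * f (S - {a})"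
      by (simp add: sg_single2)
  qed
  finally show ?thesis by simp
qed

lemma W0_single[simp]: "W0 c {a} = 0"
proof -
  have "W0 c (insert a {}) = (\<Sum>y\<in>{}. (-1) ^ card {z \<in> {}. y < z} * c y a * W0 c ({} - {y}))"
    by (rule W0_ins) auto
  then show ?thesis by simp
qed

lemma sum_single: "sum f {a} = f a" by simp

lemma W0_pair: assumes "a < b" shows "W0 c {a, b} = c a b"
proof -
  have e: "{a, b} = insert b {a}" by auto
  have "W0 c (insert b {a}) = (\<Sum>y\<in>{a}. (-1) ^ card {z \<in> {a}. y < z} * c y b * W0 c ({a} - {y}))"
    by (rule W0_ins) (use assms in auto)
  also have "\<dots> = (-1) ^ card {z \<in> {a}. a < z} * c a b * W0 c ({a} - {a})"
    by (simp only: sum_single)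
  also have e0: "{z \<in> {a}. a < z} = {}" by auto
  also have "(-1::int) ^ card {} * c a b * W0 c ({a} - {a}) = c a b" by simp
  finally show ?thesis unfolding e .
qed

lemma altsum: "finite (U :: nat set) \<Longrightarrow> (\<Sum>y\<in>U. (-1::int) ^ card {z \<in> U. y < z}) = (if odd (card U) then 1 else 0)"
proof (induction U rule: finite_linorder_max_induct)
  case empty then show ?case by simp
next
  case (insert b A)
  have bA: "b \<notin> A" using insert by auto
  have "(\<Sum>y\<in>insert b A. (-1::int) ^ card {z \<in> insert b A. y < z})
      = (-1) ^ card {z \<in> insert b A. b < z} + (\<Sum>y\<in>A. (-1) ^ card {z \<in> insert b A. y < z})"
    using insert bA by simp
  also have "{z \<in> insert b A. b < z} = {}" using insert by auto
  also have "(\<Sum>y\<in>A. (-1::int) ^ card {z \<in> insert b A. y < z}) = (\<Sum>y\<in>A. - ((-1) ^ card {z \<in> A. y < z}))"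
  proof (rule sum.cong[OF refl])
    fix y assume y: "y \<in> A"
    have "{z \<in> insert b A. y < z} = insert b {z \<in> A. y < z}" using insert y by auto
    moreover have "finite {z \<in> A. y < z}" "b \<notin> {z \<in> A. y < z}" using insert bA by auto
    ultimately show "(-1::int) ^ card {z \<in> insert b A. y < z} = - ((-1) ^ card {z \<in> A. y < z})" by simp
  qed
  finally show ?case using insert bA by (simp add: sum_negf)
qed

lemma W0_m1: "W0 (\<lambda>_ _. -1) S = (if finite S \<and> even (card S) then (-1) ^ (card S div 2) else 0)"
proof (induction "card S" arbitrary: S rule: less_induct)
  case less
  show ?case
  proof (cases "finite S \<and> S \<noteq> {}")
    case False then show ?thesis by (auto simp: W0_infinite)
  next
    case True
    then obtain x U where d: "S = insert x U" "x \<notin> U" "finite U" "\<forall>u\<in>U. u < x" "card S = Suc (card U)"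
      using max_decomp[of S] by blast
    have W: "W0 (\<lambda>_ _. -1) S = (\<Sum>y\<in>U. (-1) ^ card {z \<in> U. y < z} * (-1) * W0 (\<lambda>_ _. -1) (U - {y}))"
      unfolding d(1) by (rule W0_ins) (use d in auto)
    have IH: "W0 (\<lambda>_ _. -1) (U - {y}) = (if even (card U - 1) then (-1) ^ ((card U - 1) div 2) else 0)" if "y \<in> U" for y
    proof -
      have "card (U - {y}) < card S" using d that by (simp add: card_Diff1_less less_SucI)
      then show ?thesis using less.hyps[of "U - {y}"] d that by simp
    qed
    show ?thesis
    proof (cases "even (card S)")
      case ev: True
      then have oU: "odd (card U)" using d by simp
      then have "card U \<ge> 1" by (cases "card U") auto
      have "W0 (\<lambda>_ _. -1) S = (\<Sum>y\<in>U. (-1) ^ card {z \<in> U. y < z} * (- ((-1) ^ ((card U - 1) div 2))))"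
        unfolding W using IH oU \<open>card U \<ge> 1\<close> by (intro sum.cong) (auto simp: algebra_simps)
      also have "\<dots> = - ((-1) ^ ((card U - 1) div 2))"
        using altsum[OF d(3)] oU by (simp add: sum_negf flip: sum_distrib_right)
      also have "\<dots> = (-1) ^ (card S div 2)"
      proof -
        obtain m where m: "card U = 2 * m + 1" using oU by (metis oddE)
        then show ?thesis using d by simp
      qed
      finally show ?thesis using True ev by simp
    next
      case od: False
      then have "even (card U)" using d by simp
      have "W0 (\<lambda>_ _. -1) S = 0" unfolding W
      proof (intro sum.neutral ballI)
        fix y assume y: "y \<in> U"
        have "0 < card U" using y d(3) by (auto simp: card_gt_0_iff)
        then have "odd (card U - 1)" using \<open>even (card U)\<close> by (cases "card U") auto
        then show "(-1) ^ card {z \<in> U. y < z} * (-1) * W0 (\<lambda>_ _. -1) (U - {y}) = 0" using IH[OF y] by simp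
      qed
      then show ?thesis using od by simp
    qed
  qed
qed

definition Rf :: "nat set \<Rightarrow> int" where
  "Rf S = (if finite S then (-1) ^ (card S * (card S - 1) div 2) else 0)"

lemma R_eq: "conv (W0 (\<lambda>_ _. -1)) (lin (\<lambda>_. 1)) S = Rf S"
proof (cases "finite S")
  case False then show ?thesis by (simp add: conv_infinite Rf_def)
next
  case fin: True
  have c: "conv (W0 (\<lambda>_ _. -1)) (lin (\<lambda>_. 1)) S = W0 (\<lambda>_ _. -1) S +
      (\<Sum>a\<in>S. (-1) ^ card {z \<in> S. a < z} * 1 * W0 (\<lambda>_ _. -1) (S - {a}))"
    by (rule conv_lin_right[OF fin])
  show ?thesis
  proof (cases "even (card S)")
    case ev: True
    then obtain m where m: "card S = 2 * m" by (metis evenE)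
    have z: "W0 (\<lambda>_ _. -1) (S - {a}) = 0" if a: "a \<in> S" for a
    proof -
      have "card (S - {a}) = card S - 1" using a fin by simp
      moreover have "card S > 0" using a fin by (auto simp: card_gt_0_iff)
      ultimately have "odd (card (S - {a}))" using ev by (cases "card S") auto
      then show ?thesis by (simp add: W0_m1)
    qed
    have s0: "(\<Sum>a\<in>S. (-1) ^ card {z \<in> S. a < z} * 1 * W0 (\<lambda>_ _. -1) (S - {a})) = 0"
      by (rule sum.neutral) (use z in simp)
    have w: "W0 (\<lambda>_ _. -1) S = (-1) ^ m" using fin ev m by (simp add: W0_m1)
    have "conv (W0 (\<lambda>_ _. -1)) (lin (\<lambda>_. 1)) S = (-1) ^ m"
      unfolding c s0 w by simp
    moreover have "Rf S = (-1) ^ m"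
    proof -
      have "card S * (card S - 1) div 2 = m * (2 * m - 1)" unfolding m by simp
      moreover have "even (m * (2 * m - 1) + m)"
      proof -
        have "m * (2 * m - 1) + m = 2 * (m * m)" by (cases m) (auto simp: algebra_simps)
        then show ?thesis by simp
      qed
      moreover have "(-1::int) ^ (m * (2 * m - 1)) = (-1) ^ m" by (rule neg1_eq) fact
      ultimately show ?thesis unfolding Rf_def using fin by simp
    qed
    ultimately show ?thesis by simp
  next
    case od: False
    then obtain m where m: "card S = 2 * m + 1" by (metis oddE)
    have z: "W0 (\<lambda>_ _. -1) (S - {a}) = (-1) ^ m" if a: "a \<in> S" for a
    proof -
      have "card (S - {a}) = 2 * m" using a fin m by simp
      then show ?thesis using fin by (simp add: W0_m1)
    qed
    have w: "W0 (\<lambda>_ _. -1) S = 0" using od by (simp add: W0_m1)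
    have s1: "(\<Sum>a\<in>S. (-1) ^ card {z \<in> S. a < z} * 1 * W0 (\<lambda>_ _. -1) (S - {a})) = (\<Sum>a\<in>S. (-1) ^ card {z \<in> S. a < z} * (-1) ^ m)"
      by (rule sum.cong[OF refl]) (simp add: z)
    have "conv (W0 (\<lambda>_ _. -1)) (lin (\<lambda>_. 1)) S = (\<Sum>a\<in>S. (-1) ^ card {z \<in> S. a < z}) * (-1) ^ m"
      unfolding c w s1 by (simp add: sum_distrib_right)
    also have "\<dots> = (-1) ^ m" using altsum[OF fin] od by simp
    also have "\<dots> = Rf S"
    proof -
      have "card S * (card S - 1) div 2 = (2 * m + 1) * m" unfolding m by simp
      moreover have "even ((2 * m + 1) * m + m)"
      proof -
        have "(2 * m + 1) * m + m = 2 * (m * m + m)" by (simp add: algebra_simps)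
        then show ?thesis by simp
      qed
      moreover have "(-1::int) ^ ((2 * m + 1) * m) = (-1) ^ m" by (rule neg1_eq) fact
      ultimately show ?thesis unfolding Rf_def using fin by simp
    qed
    finally show ?thesis .
  qed
qed

lemma sum3: "a \<noteq> b \<Longrightarrow> a \<noteq> c \<Longrightarrow> b \<noteq> c \<Longrightarrow> sum f {a, b, c} = f a + f b + f c"
  by (simp add: algebra_simps)

lemma sum2: "a \<noteq> b \<Longrightarrow> sum f {a, b} = f a + f b"
  by simp

lemma W0_card4:
  assumes k: "\<And>y x. k y x = q x - q y" and lt: "a < b" "b < c" "c < d"
  shows "W0 k {a, b, c, d} = 0"
proof -
  have S: "{a, b, c, d} = insert d {a, b, c}" by auto
  have n: "a \<noteq> b" "a \<noteq> c" "b \<noteq> c" using lt by auto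
  have "W0 k (insert d {a, b, c}) = (\<Sum>y\<in>{a, b, c}. (-1) ^ card {z \<in> {a, b, c}. y < z} * k y d * W0 k ({a, b, c} - {y}))"
    by (rule W0_ins) (use lt in auto)
  also have "\<dots> = (-1) ^ card {z \<in> {a, b, c}. a < z} * k a d * W0 k ({a, b, c} - {a})
      + (-1) ^ card {z \<in> {a, b, c}. b < z} * k b d * W0 k ({a, b, c} - {b})
      + (-1) ^ card {z \<in> {a, b, c}. c < z} * k c d * W0 k ({a, b, c} - {c})"
    by (simp only: sum3[OF n])
  also have "{z \<in> {a, b, c}. a < z} = {b, c}" using lt by auto
  also have "{z \<in> {a, b, c}. b < z} = {c}" using lt by auto
  also have "{z \<in> {a, b, c}. c < z} = {}" using lt by auto
  also have "{a, b, c} - {a} = {b, c}" using lt by auto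
  also have "{a, b, c} - {b} = {a, c}" using lt by auto
  also have "{a, b, c} - {c} = {a, b}" using lt by auto
  finally have "W0 k (insert d {a, b, c}) = k a d * k b c - k b d * k a c + k c d * k a b"
    using lt by (simp add: W0_pair)
  also have "\<dots> = 0" unfolding k by (simp add: algebra_simps)
  finally show ?thesis unfolding S .
qed

lemma W0_rank2:
  assumes k: "\<And>y x. k y x = q x - q y"
  shows "card S \<ge> 3 \<Longrightarrow> W0 k S = 0"
proof (induction "card S" arbitrary: S rule: less_induct)
  case less
  show ?case
  proof (cases "even (card S)")
    case False then show ?thesis using W0_even[of k S] by blast
  next
    case ev: True
    have fin1: "finite S" using less.prems by (cases "finite S") auto
    have fin2: "S \<noteq> {}" using less.prems by auto
    note fin = fin1 fin2
    show ?thesis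
    proof (cases "card S = 4")
      case True
      then obtain a b c d where "a < b" "b < c" "c < d" "S = {a, b, c, d}" using card4_decomp[of S] by blast
      then show ?thesis using W0_card4[OF k, of a b c d] by simp
    next
      case False
      have ge: "card S \<ge> 6"
      proof -
        obtain j where j: "card S = 2 * j" using ev by (metis evenE)
        show ?thesis using less.prems False j by presburger
      qed
      obtain x U where d: "S = insert x U" "x \<notin> U" "finite U" "\<forall>u\<in>U. u < x" "card S = Suc (card U)"
        using max_decomp[of S] fin by blast
      have "W0 k S = (\<Sum>y\<in>U. (-1) ^ card {z \<in> U. y < z} * k y x * W0 k (U - {y}))"
        unfolding d(1) by (rule W0_ins) (use d in auto)
      also have "\<dots> = 0"
      proof (intro sum.neutral ballI)
        fix y assume y: "y \<in> U"
        have "card (U - {y}) = card U - 1" using y d(3) by simp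
        then have c: "card (U - {y}) < card S" "card (U - {y}) \<ge> 3" using ge d(5) by auto
        show "(-1) ^ card {z \<in> U. y < z} * k y x * W0 k (U - {y}) = 0"
          using less.hyps[OF c(1) c(2)] by simp
      qed
      finally show ?thesis .
    qed
  qed
qed

lemma X_eq:
  assumes k: "\<And>y x. k y x = q x - q y"
  shows "conv (lin (\<lambda>a. - q a)) (lin (\<lambda>_. 1)) S = conv (W0 k) (lin (\<lambda>a. 1 - q a)) S"
proof (cases "finite S")
  case False then show ?thesis by (simp add: conv_infinite)
next
  case fin: True
  have L: "conv (lin (\<lambda>a. - q a)) (lin (\<lambda>_. 1)) S = lin (\<lambda>a. - q a) S + (\<Sum>a\<in>S. (-1) ^ card {z \<in> S. a < z} * 1 * lin (\<lambda>a. - q a) (S - {a}))"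
    by (rule conv_lin_right[OF fin])
  have R: "conv (W0 k) (lin (\<lambda>a. 1 - q a)) S = W0 k S + (\<Sum>a\<in>S. (-1) ^ card {z \<in> S. a < z} * (1 - q a) * W0 k (S - {a}))"
    by (rule conv_lin_right[OF fin])
  consider "card S = 0" | "card S = 1" | "card S = 2" | "card S = 3" | "card S \<ge> 4" by linarith
  then show ?thesis
  proof cases
    case 1 then have "S = {}" using fin by simp
    then show ?thesis by simp
  next
    case 2
    then obtain a where S: "S = {a}" using card1_decomp[of S] by blast
    have e0: "{z \<in> {a}. a < z} = {}" by auto
    have "conv (lin (\<lambda>a. - q a)) (lin (\<lambda>_. 1)) S = - q a + (-1) ^ card {z \<in> {a}. a < z} * 1 * lin (\<lambda>a. - q a) ({a} - {a})"
      unfolding L unfolding S by (simp only: sum_single lin_single)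
    also have "\<dots> = 1 - q a" unfolding e0 by simp
    finally have l: "conv (lin (\<lambda>a. - q a)) (lin (\<lambda>_. 1)) S = 1 - q a" .
    have "conv (W0 k) (lin (\<lambda>a. 1 - q a)) S = W0 k {a} + (-1) ^ card {z \<in> {a}. a < z} * (1 - q a) * W0 k ({a} - {a})"
      unfolding R unfolding S by (simp only: sum_single)
    also have "\<dots> = 1 - q a" unfolding e0 by simp
    finally show ?thesis using l by simp
  next
    case 3
    then obtain a b where ab: "a < b" and S: "S = {a, b}" using card2_decomp[of S] by blast
    have n: "a \<noteq> b" using ab by simp
    have e1: "{z \<in> {a, b}. a < z} = {b}" "{z \<in> {a, b}. b < z} = {}" "{a, b} - {a} = {b}" "{a, b} - {b} = {a}"
      using ab by auto
    have l2: "lin (\<lambda>a. - q a) {a, b} = 0" using n by (simp add: lin_big)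
    have "conv (lin (\<lambda>a. - q a)) (lin (\<lambda>_. 1)) S = lin (\<lambda>a. - q a) {a, b}
       + ((-1) ^ card {z \<in> {a, b}. a < z} * 1 * lin (\<lambda>a. - q a) ({a, b} - {a})
       + (-1) ^ card {z \<in> {a, b}. b < z} * 1 * lin (\<lambda>a. - q a) ({a, b} - {b}))"
      unfolding L unfolding S by (simp only: sum2[OF n])
    also have "\<dots> = q b - q a" unfolding e1 l2 by simp
    finally have l: "conv (lin (\<lambda>a. - q a)) (lin (\<lambda>_. 1)) S = q b - q a" .
    have "conv (W0 k) (lin (\<lambda>a. 1 - q a)) S = W0 k {a, b}
       + ((-1) ^ card {z \<in> {a, b}. a < z} * (1 - q a) * W0 k ({a, b} - {a})
       + (-1) ^ card {z \<in> {a, b}. b < z} * (1 - q b) * W0 k ({a, b} - {b}))"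
      unfolding R unfolding S by (simp only: sum2[OF n])
    also have "\<dots> = q b - q a" unfolding e1 using ab by (simp add: W0_pair k)
    finally show ?thesis using l by simp
  next
    case 4
    then obtain a b c where abc: "a < b" "b < c" and S: "S = {a, b, c}" using card3_decomp[of S] by blast
    have n: "a \<noteq> b" "a \<noteq> c" "b \<noteq> c" using abc by auto
    have l: "conv (lin (\<lambda>a. - q a)) (lin (\<lambda>_. 1)) S = 0"
    proof -
      have "lin (\<lambda>a. - q a) S = 0" using 4 by (simp add: lin_big)
      moreover have "lin (\<lambda>a. - q a) (S - {y}) = 0" if "y \<in> S" for y
        using that 4 fin by (simp add: lin_big)
      ultimately show ?thesis unfolding L by simp
    qed
    have e1: "{z \<in> {a, b, c}. a < z} = {b, c}" "{z \<in> {a, b, c}. b < z} = {c}" "{z \<in> {a, b, c}. c < z} = {}"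
      "{a, b, c} - {a} = {b, c}" "{a, b, c} - {b} = {a, c}" "{a, b, c} - {c} = {a, b}"
      using abc by auto
    have w3: "W0 k {a, b, c} = 0" using W0_rank2[OF k, of "{a, b, c}"] n by simp
    have "conv (W0 k) (lin (\<lambda>a. 1 - q a)) S = W0 k {a, b, c}
       + ((-1) ^ card {z \<in> {a, b, c}. a < z} * (1 - q a) * W0 k ({a, b, c} - {a})
       + (-1) ^ card {z \<in> {a, b, c}. b < z} * (1 - q b) * W0 k ({a, b, c} - {b})
       + (-1) ^ card {z \<in> {a, b, c}. c < z} * (1 - q c) * W0 k ({a, b, c} - {c}))"
      unfolding R unfolding S by (simp only: sum3[OF n])
    also have "\<dots> = (1 - q a) * k b c - (1 - q b) * k a c + (1 - q c) * k a b"
      unfolding e1 w3 using abc n by (simp add: W0_pair algebra_simps)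
    also have "\<dots> = 0" unfolding k by (simp add: algebra_simps)
    finally show ?thesis using l by simp
  next
    case 5
    have l: "conv (lin (\<lambda>a. - q a)) (lin (\<lambda>_. 1)) S = 0"
    proof -
      have "lin (\<lambda>a. - q a) S = 0" using 5 by (simp add: lin_big)
      moreover have "lin (\<lambda>a. - q a) (S - {y}) = 0" if "y \<in> S" for y
        using that 5 fin by (simp add: lin_big)
      ultimately show ?thesis unfolding L by simp
    qed
    have r: "conv (W0 k) (lin (\<lambda>a. 1 - q a)) S = 0"
    proof -
      have "W0 k S = 0" using 5 by (intro W0_rank2[OF k]) simp
      moreover have "W0 k (S - {y}) = 0" if "y \<in> S" for y
        using that 5 fin by (intro W0_rank2[OF k]) simp
      ultimately show ?thesis unfolding R by simp
    qed
    show ?thesis using l r by simp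
  qed
qed

definition qf :: "(nat \<Rightarrow> real) \<Rightarrow> nat \<Rightarrow> int" where
  "qf lam a = c1 (lam a)"

definition cc2 :: "(nat \<Rightarrow> real) \<Rightarrow> nat \<Rightarrow> nat \<Rightarrow> int" where
  "cc2 lam y x = c2 (lam y) (lam x)"

definition Hf :: "(nat \<Rightarrow> real) \<Rightarrow> nat set \<Rightarrow> int" where
  "Hf lam = conv (W0 (cc2 lam)) (lin (\<lambda>a. - qf lam a))"

definition dd :: "(nat \<Rightarrow> real) \<Rightarrow> nat \<Rightarrow> nat \<Rightarrow> int" where
  "dd lam y x = cc2 lam y x + (-1) + (qf lam x - qf lam y)"

lemma W0_add_fun: "conv (W0 c) (W0 c') = W0 (\<lambda>y x. c y x + c' y x)"
  by (rule ext) (rule W0_add)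

lemma comm_W0_fun: "conv f (W0 c) = conv (W0 c) f"
  by (rule ext) (rule conv_comm_even[symmetric], use W0_even in blast)

lemma R_eq_fun: "conv (W0 (\<lambda>_ _. -1)) (lin (\<lambda>_. 1)) = Rf"
  by (rule ext) (rule R_eq)

lemma X_eq_fun: "conv (lin (\<lambda>a. - qf lam a)) (lin (\<lambda>_. 1)) = conv (W0 (\<lambda>y x. qf lam x - qf lam y)) (lin (\<lambda>a. 1 - qf lam a))"
  by (rule ext) (rule X_eq, simp)

lemma chain: "conv (Hf lam) Rf = conv (W0 (dd lam)) (lin (\<lambda>a. 1 - qf lam a))"
proof -
  let ?W2 = "W0 (cc2 lam)" and ?Lu = "lin (\<lambda>a. - qf lam a)" and ?Wm = "W0 (\<lambda>_ _. -1::int)"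
    and ?L1 = "lin (\<lambda>_. 1)"
  have "conv (Hf lam) Rf = conv (conv ?W2 ?Lu) (conv ?Wm ?L1)"
    unfolding Hf_def R_eq_fun ..
  also have "\<dots> = conv ?W2 (conv ?Lu (conv ?Wm ?L1))" by (rule conv_assoc_fun)
  also have "conv ?Lu (conv ?Wm ?L1) = conv (conv ?Lu ?Wm) ?L1" by (rule conv_assoc_fun[symmetric])
  also have "conv ?Lu ?Wm = conv ?Wm ?Lu" by (rule comm_W0_fun)
  also have "conv (conv ?Wm ?Lu) ?L1 = conv ?Wm (conv ?Lu ?L1)" by (rule conv_assoc_fun)
  also have "conv ?W2 (conv ?Wm (conv ?Lu ?L1)) = conv (conv ?W2 ?Wm) (conv ?Lu ?L1)" by (rule conv_assoc_fun[symmetric])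
  also have "conv ?W2 ?Wm = W0 (\<lambda>y x. cc2 lam y x + (-1))" by (rule W0_add_fun)
  also have "conv ?Lu ?L1 = conv (W0 (\<lambda>y x. qf lam x - qf lam y)) (lin (\<lambda>a. 1 - qf lam a))" by (rule X_eq_fun)
  also have "conv (W0 (\<lambda>y x. cc2 lam y x + (-1))) (conv (W0 (\<lambda>y x. qf lam x - qf lam y)) (lin (\<lambda>a. 1 - qf lam a)))
     = conv (conv (W0 (\<lambda>y x. cc2 lam y x + (-1))) (W0 (\<lambda>y x. qf lam x - qf lam y))) (lin (\<lambda>a. 1 - qf lam a))"
    by (rule conv_assoc_fun[symmetric])
  also have "conv (W0 (\<lambda>y x. cc2 lam y x + (-1))) (W0 (\<lambda>y x. qf lam x - qf lam y)) = W0 (dd lam)"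
    unfolding W0_add_fun dd_def ..
  finally show ?thesis .
qed

lemma s_blk_empty[simp]: "s_blk {} lam = 0" by (simp add: s_blk_def)

lemma s_blk_insert: "finite U \<Longrightarrow> x \<notin> U \<Longrightarrow> s_blk (insert x U) lam = lam x + s_blk U lam"
  by (simp add: s_blk_def)

lemma s_blk_remove: "finite S \<Longrightarrow> a \<in> S \<Longrightarrow> s_blk S lam = lam a + s_blk (S - {a}) lam"
  by (simp add: s_blk_def sum.remove)

lemma W0_vanish_pos:
  assumes d0: "\<And>y x. y < x \<Longrightarrow> lam y + lam x > 0 \<Longrightarrow> d y x = 0"
  shows "finite S \<Longrightarrow> s_blk S lam > 0 \<Longrightarrow> W0 d S = 0"
proof (induction "card S" arbitrary: S rule: less_induct)
  case less
  have ne: "S \<noteq> {}" using less.prems by auto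
  obtain x U where dc: "S = insert x U" "x \<notin> U" "finite U" "\<forall>u\<in>U. u < x" "card S = Suc (card U)"
    using max_decomp[of S] less.prems ne by blast
  have "W0 d S = (\<Sum>y\<in>U. (-1) ^ card {z \<in> U. y < z} * d y x * W0 d (U - {y}))"
    unfolding dc(1) by (rule W0_ins) (use dc in auto)
  also have "\<dots> = 0"
  proof (intro sum.neutral ballI)
    fix y assume y: "y \<in> U"
    have s: "s_blk S lam = lam x + (lam y + s_blk (U - {y}) lam)"
      unfolding dc(1) using dc y by (simp add: s_blk_insert s_blk_remove[of U y])
    show "(-1) ^ card {z \<in> U. y < z} * d y x * W0 d (U - {y}) = 0"
    proof (cases "lam y + lam x > 0")
      case True then show ?thesis using d0[of y x] dc(4) y by simp
    next
      case False
      then have "s_blk (U - {y}) lam > 0" using s less.prems(2) by simp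
      moreover have "card (U - {y}) < card S" using dc y by (simp add: card_Diff1_less less_SucI)
      ultimately have "W0 d (U - {y}) = 0" using less.hyps dc(3) by simp
      then show ?thesis by simp
    qed
  qed
  finally show ?case .
qed

lemma W0_vanish_nonpos:
  assumes c0: "\<And>y x. y < x \<Longrightarrow> lam y + lam x \<le> 0 \<Longrightarrow> c y x = 0"
  shows "finite S \<Longrightarrow> S \<noteq> {} \<Longrightarrow> s_blk S lam \<le> 0 \<Longrightarrow> W0 c S = 0"
proof (induction "card S" arbitrary: S rule: less_induct)
  case less
  obtain x U where dc: "S = insert x U" "x \<notin> U" "finite U" "\<forall>u\<in>U. u < x" "card S = Suc (card U)"
    using max_decomp[of S] less.prems by blast
  have "W0 c S = (\<Sum>y\<in>U. (-1) ^ card {z \<in> U. y < z} * c y x * W0 c (U - {y}))"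
    unfolding dc(1) by (rule W0_ins) (use dc in auto)
  also have "\<dots> = 0"
  proof (intro sum.neutral ballI)
    fix y assume y: "y \<in> U"
    have s: "s_blk S lam = lam x + (lam y + s_blk (U - {y}) lam)"
      unfolding dc(1) using dc y by (simp add: s_blk_insert s_blk_remove[of U y])
    show "(-1) ^ card {z \<in> U. y < z} * c y x * W0 c (U - {y}) = 0"
    proof (cases "lam y + lam x \<le> 0")
      case True then show ?thesis using c0[of y x] dc(4) y by simp
    next
      case False
      then have neg: "s_blk (U - {y}) lam < 0" using s less.prems(3) by simp
      have "U - {y} \<noteq> {}"
      proof
        assume h: "U - {y} = {}"
        have "s_blk (U - {y}) lam = 0" unfolding h by simp
        then show False using neg by simp
      qed
      moreover have "card (U - {y}) < card S" using dc y by (simp add: card_Diff1_less less_SucI)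
      ultimately have "W0 c (U - {y}) = 0" using less.hyps dc(3) neg by simp
      then show ?thesis by simp
    qed
  qed
  finally show ?case .
qed

lemma dd_zero: "y < x \<Longrightarrow> lam y + lam x > 0 \<Longrightarrow> dd lam y x = 0"
  by (auto simp: dd_def cc2_def qf_def c1_def c2_def)

lemma cc2_zero: "y < x \<Longrightarrow> lam y + lam x \<le> 0 \<Longrightarrow> cc2 lam y x = 0"
  by (auto simp: cc2_def c2_def)

lemma Hf_empty: "Hf lam {} = 1"
  by (simp add: Hf_def)

lemma Hf_nonpos:
  assumes "finite S" "S \<noteq> {}" "s_blk S lam \<le> 0"
  shows "Hf lam S = 0"
proof -
  have "Hf lam S = W0 (cc2 lam) S + (\<Sum>a\<in>S. (-1) ^ card {z \<in> S. a < z} * (- qf lam a) * W0 (cc2 lam) (S - {a}))"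
    unfolding Hf_def by (rule conv_lin_right[OF assms(1)])
  also have "W0 (cc2 lam) S = 0" by (rule W0_vanish_nonpos[OF cc2_zero assms])
  also have "(\<Sum>a\<in>S. (-1) ^ card {z \<in> S. a < z} * (- qf lam a) * W0 (cc2 lam) (S - {a})) = 0"
  proof (intro sum.neutral ballI)
    fix a assume a: "a \<in> S"
    show "(-1) ^ card {z \<in> S. a < z} * (- qf lam a) * W0 (cc2 lam) (S - {a}) = 0"
    proof (cases "lam a > 0")
      case False then show ?thesis by (simp add: qf_def c1_def)
    next
      case True
      have "s_blk S lam = lam a + s_blk (S - {a}) lam" using assms(1) a by (rule s_blk_remove)
      then have neg: "s_blk (S - {a}) lam < 0" using True assms(3) by simp
      have "S - {a} \<noteq> {}"
      proof
        assume h: "S - {a} = {}"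
        have "s_blk (S - {a}) lam = 0" unfolding h by simp
        then show False using neg by simp
      qed
      then have "W0 (cc2 lam) (S - {a}) = 0"
        using W0_vanish_nonpos[OF cc2_zero, where S="S - {a}"] assms(1) neg by simp
      then show ?thesis by simp
    qed
  qed
  finally show ?thesis by simp
qed

lemma Hf_pos:
  assumes "finite S" "s_blk S lam > 0"
  shows "conv (Hf lam) Rf S = 0"
proof -
  have "conv (Hf lam) Rf S = W0 (dd lam) S + (\<Sum>a\<in>S. (-1) ^ card {z \<in> S. a < z} * (1 - qf lam a) * W0 (dd lam) (S - {a}))"
    unfolding chain by (rule conv_lin_right[OF assms(1)])
  also have "W0 (dd lam) S = 0" by (rule W0_vanish_pos[OF dd_zero assms])
  also have "(\<Sum>a\<in>S. (-1) ^ card {z \<in> S. a < z} * (1 - qf lam a) * W0 (dd lam) (S - {a})) = 0"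
  proof (intro sum.neutral ballI)
    fix a assume a: "a \<in> S"
    show "(-1) ^ card {z \<in> S. a < z} * (1 - qf lam a) * W0 (dd lam) (S - {a}) = 0"
    proof (cases "lam a > 0")
      case True then show ?thesis by (simp add: qf_def c1_def)
    next
      case False
      have "s_blk S lam = lam a + s_blk (S - {a}) lam" using assms(1) a by (rule s_blk_remove)
      then have "s_blk (S - {a}) lam > 0" using False assms(2) by simp
      then have "W0 (dd lam) (S - {a}) = 0"
        by (intro W0_vanish_pos[OF dd_zero]) (use assms(1) in auto)
      then show ?thesis by simp
    qed
  qed
  finally show ?thesis by simp
qed

lemma conv_split_top:
  assumes "finite S"
  shows "conv G Rf S = G S + (\<Sum>T\<in>Pow S - {S}. sg T (S - T) * G T * Rf (S - T))"
proof -
  have "conv G Rf S = sg S (S - S) * G S * Rf (S - S) + (\<Sum>T\<in>Pow S - {S}. sg T (S - T) * G T * Rf (S - T))"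
    unfolding conv_def by (rule sum.remove) (use assms in auto)
  then show ?thesis by (simp add: Rf_def)
qed

lemma uniqueness:
  assumes e1: "G1 {} = 1" and e2: "G2 {} = 1"
    and n1: "\<And>S. finite S \<Longrightarrow> S \<noteq> {} \<Longrightarrow> s_blk S lam \<le> 0 \<Longrightarrow> G1 S = 0"
    and n2: "\<And>S. finite S \<Longrightarrow> S \<noteq> {} \<Longrightarrow> s_blk S lam \<le> 0 \<Longrightarrow> G2 S = 0"
    and p1: "\<And>S. finite S \<Longrightarrow> S \<noteq> {} \<Longrightarrow> s_blk S lam > 0 \<Longrightarrow> conv G1 Rf S = 0"
    and p2: "\<And>S. finite S \<Longrightarrow> S \<noteq> {} \<Longrightarrow> s_blk S lam > 0 \<Longrightarrow> conv G2 Rf S = 0"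
  shows "finite S \<Longrightarrow> G1 S = G2 S"
proof (induction "card S" arbitrary: S rule: less_induct)
  case less
  show ?case
  proof (cases "S = {}")
    case True then show ?thesis using e1 e2 by simp
  next
    case ne: False
    show ?thesis
    proof (cases "s_blk S lam \<le> 0")
      case True then show ?thesis using n1 n2 less.prems ne by simp
    next
      case False
      then have pos: "s_blk S lam > 0" by simp
      have eq: "(\<Sum>T\<in>Pow S - {S}. sg T (S - T) * G1 T * Rf (S - T)) = (\<Sum>T\<in>Pow S - {S}. sg T (S - T) * G2 T * Rf (S - T))"
      proof (rule sum.cong[OF refl])
        fix T assume T: "T \<in> Pow S - {S}"
        then have "T \<subset> S" by auto
        then have "card T < card S" using less.prems by (simp add: psubset_card_mono)
        moreover have "finite T" using T less.prems by (auto intro: finite_subset)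
        ultimately have "G1 T = G2 T" using less.hyps by blast
        then show "sg T (S - T) * G1 T * Rf (S - T) = sg T (S - T) * G2 T * Rf (S - T)" by simp
      qed
      have "G1 S = - (\<Sum>T\<in>Pow S - {S}. sg T (S - T) * G1 T * Rf (S - T))"
        using p1[OF less.prems ne pos] conv_split_top[OF less.prems, of G1] by simp
      also have "\<dots> = G2 S"
        using p2[OF less.prems ne pos] conv_split_top[OF less.prems, of G2] eq by simp
      finally show ?thesis .
    qed
  qed
qed

definition opart :: "nat set \<Rightarrow> nat set list \<Rightarrow> bool" where
  "opart S P \<longleftrightarrow> (\<forall>I\<in>set P. I \<noteq> {})
     \<and> (\<forall>i<length P. \<forall>j<length P. i \<noteq> j \<longrightarrow> P ! i \<inter> P ! j = {})
     \<and> \<Union>(set P) = S"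

lemma is_ord_partition_opart: "is_ord_partition n P = opart {1..n} P"
  by (simp add: is_ord_partition_def opart_def)

lemma opart_Nil[simp]: "opart S [] \<longleftrightarrow> S = {}"
  by (auto simp: opart_def)

lemma opart_Cons: "opart S (A # Q) \<longleftrightarrow> A \<noteq> {} \<and> A \<subseteq> S \<and> opart (S - A) Q"
proof
  assume h: "opart S (A # Q)"
  have ne: "\<forall>I\<in>set (A # Q). I \<noteq> {}" using h unfolding opart_def by (elim conjE)
  have dj: "\<forall>i<length (A # Q). \<forall>j<length (A # Q). i \<noteq> j \<longrightarrow> (A # Q) ! i \<inter> (A # Q) ! j = {}"
    using h unfolding opart_def by (elim conjE)
  have un: "\<Union>(set (A # Q)) = S" using h unfolding opart_def by (elim conjE)
  have djA: "A \<inter> B = {}" if B: "B \<in> set Q" for B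
  proof -
    obtain j where j: "j < length Q" "Q ! j = B" using B[unfolded in_set_conv_nth] by blast
    have "(A # Q) ! 0 \<inter> (A # Q) ! Suc j = {}" using dj[rule_format, of 0 "Suc j"] j by simp
    then show ?thesis using j by simp
  qed
  have djQ: "\<forall>i<length Q. \<forall>j<length Q. i \<noteq> j \<longrightarrow> Q ! i \<inter> Q ! j = {}"
  proof (intro allI impI)
    fix i j assume "i < length Q" "j < length Q" "i \<noteq> j"
    then have "(A # Q) ! Suc i \<inter> (A # Q) ! Suc j = {}" using dj[rule_format, of "Suc i" "Suc j"] by simp
    then show "Q ! i \<inter> Q ! j = {}" by simp
  qed
  have "\<Union>(set Q) = S - A" using un djA by auto
  then show "A \<noteq> {} \<and> A \<subseteq> S \<and> opart (S - A) Q" using ne un djQ by (auto simp: opart_def)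
next
  assume h: "A \<noteq> {} \<and> A \<subseteq> S \<and> opart (S - A) Q"
  then have hq: "opart (S - A) Q" by simp
  have ne: "\<forall>I\<in>set Q. I \<noteq> {}" using hq unfolding opart_def by (elim conjE)
  have djQ: "\<forall>i<length Q. \<forall>j<length Q. i \<noteq> j \<longrightarrow> Q ! i \<inter> Q ! j = {}" using hq unfolding opart_def by (elim conjE)
  have un: "\<Union>(set Q) = S - A" using hq unfolding opart_def by (elim conjE)
  have djA: "A \<inter> Q ! j = {}" if "j < length Q" for j
  proof -
    have "Q ! j \<in> set Q" using that by simp
    then have "Q ! j \<subseteq> S - A" using un by auto
    then show ?thesis by auto
  qed
  have dj: "\<forall>i<length (A # Q). \<forall>j<length (A # Q). i \<noteq> j \<longrightarrow> (A # Q) ! i \<inter> (A # Q) ! j = {}"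
  proof (intro allI impI)
    fix i j assume i: "i < length (A # Q)" and j: "j < length (A # Q)" and ij: "i \<noteq> j"
    show "(A # Q) ! i \<inter> (A # Q) ! j = {}"
    proof (cases i)
      case 0
      then obtain j' where "j = Suc j'" "j' < length Q" using ij j by (cases j) auto
      then show ?thesis using 0 djA by simp
    next
      case (Suc i')
      show ?thesis
      proof (cases j)
        case 0 then show ?thesis using Suc djA i by (auto simp: Int_commute)
      next
        case (Suc j') then show ?thesis using \<open>i = Suc i'\<close> djQ i j ij by simp
      qed
    qed
  qed
  show "opart S (A # Q)" using h ne dj un by (auto simp: opart_def)
qed

lemma opart_snoc: "opart S (Q @ [I]) \<longleftrightarrow> I \<noteq> {} \<and> I \<subseteq> S \<and> opart (S - I) Q"
proof (induction Q arbitrary: S)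
  case Nil then show ?case by (auto simp: opart_Cons)
next
  case (Cons A Q)
  have "opart S ((A # Q) @ [I]) \<longleftrightarrow> A \<noteq> {} \<and> A \<subseteq> S \<and> opart (S - A) (Q @ [I])"
    by (simp add: opart_Cons)
  also have "\<dots> \<longleftrightarrow> A \<noteq> {} \<and> A \<subseteq> S \<and> I \<noteq> {} \<and> I \<subseteq> S - A \<and> opart (S - A - I) Q"
    using Cons.IH by simp
  also have "\<dots> \<longleftrightarrow> I \<noteq> {} \<and> I \<subseteq> S \<and> opart (S - I) (A # Q)"
  proof -
    have e: "S - A - I = S - I - A" by auto
    show ?thesis unfolding opart_Cons e by auto
  qed
  finally show ?case .
qed

lemma opart_sub: "opart S P \<Longrightarrow> I \<in> set P \<Longrightarrow> I \<subseteq> S"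
  by (auto simp: opart_def)

definition pos :: "(nat \<Rightarrow> real) \<Rightarrow> nat set list \<Rightarrow> bool" where
  "pos lam P \<longleftrightarrow> (\<forall>i. 1 \<le> i \<and> i \<le> length P \<longrightarrow> (\<Sum>J\<leftarrow>take i P. s_blk J lam) > 0)"

definition OPpos :: "nat set \<Rightarrow> (nat \<Rightarrow> real) \<Rightarrow> nat set list set" where
  "OPpos S lam = {P. opart S P \<and> pos lam P}"

lemma P_ord_OPpos: "P_ord n lam = OPpos {1..n} lam"
  by (simp add: P_ord_def OPpos_def pos_def is_ord_partition_opart)

lemma pos_snoc: "pos lam (Q @ [I]) \<longleftrightarrow> pos lam Q \<and> (\<Sum>J\<leftarrow>Q @ [I]. s_blk J lam) > 0"
proof -
  have "pos lam (Q @ [I]) \<longleftrightarrow> (\<forall>i. 1 \<le> i \<and> i \<le> length Q \<longrightarrow> (\<Sum>J\<leftarrow>take i Q. s_blk J lam) > 0) \<and> (\<Sum>J\<leftarrow>Q @ [I]. s_blk J lam) > 0"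
  proof
    assume h: "pos lam (Q @ [I])"
    have "(\<Sum>J\<leftarrow>take i Q. s_blk J lam) > 0" if "1 \<le> i" "i \<le> length Q" for i
      using h[unfolded pos_def, rule_format, of i] that by simp
    moreover have "(\<Sum>J\<leftarrow>take (length (Q @ [I])) (Q @ [I]). s_blk J lam) > 0"
      using h[unfolded pos_def, rule_format, of "length (Q @ [I])"] by simp
    ultimately show "(\<forall>i. 1 \<le> i \<and> i \<le> length Q \<longrightarrow> (\<Sum>J\<leftarrow>take i Q. s_blk J lam) > 0) \<and> (\<Sum>J\<leftarrow>Q @ [I]. s_blk J lam) > 0"
      by simp
  next
    assume h: "(\<forall>i. 1 \<le> i \<and> i \<le> length Q \<longrightarrow> (\<Sum>J\<leftarrow>take i Q. s_blk J lam) > 0) \<and> (\<Sum>J\<leftarrow>Q @ [I]. s_blk J lam) > 0"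
    show "pos lam (Q @ [I])" unfolding pos_def
    proof (intro allI impI)
      fix i assume i: "1 \<le> i \<and> i \<le> length (Q @ [I])"
      show "(\<Sum>J\<leftarrow>take i (Q @ [I]). s_blk J lam) > 0"
      proof (cases "i \<le> length Q")
        case True then show ?thesis using h i by simp
      next
        case False then have "i = length Q + 1" using i by simp
        then show ?thesis using h by simp
      qed
    qed
  qed
  then show ?thesis by (simp add: pos_def)
qed

lemma sum_list_opart: "opart S P \<Longrightarrow> finite S \<Longrightarrow> (\<Sum>J\<leftarrow>P. s_blk J lam) = s_blk S lam"
proof (induction P arbitrary: S)
  case Nil then show ?case by (simp add: s_blk_def)
next
  case (Cons A Q)
  then have A: "A \<subseteq> S" "opart (S - A) Q" by (auto simp: opart_Cons)
  have "s_blk S lam = s_blk A lam + s_blk (S - A) lam"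
    unfolding s_blk_def using sum.subset_diff[of A S lam] A Cons.prems(2) by (simp add: add.commute)
  then show ?case using Cons.IH[OF A(2)] Cons.prems(2) by simp
qed

lemma finite_opart: "finite S \<Longrightarrow> finite {P. opart S P}"
proof (induction "card S" arbitrary: S rule: less_induct)
  case less
  have sub: "{P. opart S P} \<subseteq> {[]} \<union> (\<Union>I\<in>Pow S - {{}}. (\<lambda>Q. Q @ [I]) ` {Q. opart (S - I) Q})"
  proof
    fix P assume "P \<in> {P. opart S P}"
    then have P: "opart S P" by simp
    show "P \<in> {[]} \<union> (\<Union>I\<in>Pow S - {{}}. (\<lambda>Q. Q @ [I]) ` {Q. opart (S - I) Q})"
    proof (cases P rule: rev_exhaust)
      case Nil then show ?thesis by simp
    next
      case (snoc Q I)
      then have "I \<noteq> {}" "I \<subseteq> S" "opart (S - I) Q" using P by (auto simp: opart_snoc)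
      then show ?thesis using snoc by blast
    qed
  qed
  have "finite {Q. opart (S - I) Q}" if "I \<in> Pow S - {{}}" for I
  proof -
    have "S - I \<subset> S" using that by auto
    then have "card (S - I) < card S" using less.prems by (simp add: psubset_card_mono)
    then show ?thesis using less.hyps less.prems by simp
  qed
  then show ?case using less.prems by (intro finite_subset[OF sub]) auto
qed

lemma finite_OPpos: "finite S \<Longrightarrow> finite (OPpos S lam)"
  unfolding OPpos_def by (rule finite_subset[OF _ finite_opart]) auto

primrec sgnL :: "nat set list \<Rightarrow> int" where
  "sgnL [] = 1"
| "sgnL (A # P) = sg A (\<Union>(set P)) * sgnL P"

lemma sgnL_snoc: "opart S (Q @ [I]) \<Longrightarrow> finite S \<Longrightarrow> sgnL (Q @ [I]) = sgnL Q * sg (S - I) I"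
proof (induction Q arbitrary: S)
  case Nil then have "S = I" by (auto simp: opart_Cons)
  then show ?case by simp
next
  case (Cons A Q)
  have h: "A \<noteq> {}" "A \<subseteq> S" "opart (S - A) (Q @ [I])" using Cons.prems(1) by (auto simp: opart_Cons)
  then have h2: "I \<noteq> {}" "I \<subseteq> S - A" "opart (S - A - I) Q" by (auto simp: opart_snoc)
  then have uQ: "\<Union>(set Q) = S - A - I" by (simp add: opart_def)
  have fin: "finite A" "finite I" "finite (S - A - I)" using h h2 Cons.prems(2) by (auto intro: finite_subset)
  have IH: "sgnL (Q @ [I]) = sgnL Q * sg (S - A - I) I" using Cons.IH[OF h(3)] Cons.prems(2) by simp
  have u1: "\<Union>(set (Q @ [I])) = (S - A - I) \<union> I" using uQ by auto
  have s1: "sg A ((S - A - I) \<union> I) = sg A (S - A - I) * sg A I" by (rule sg_Un2) (use fin in auto)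
  have e2: "S - I = A \<union> (S - A - I)" using h h2 by auto
  have s2: "sg (A \<union> (S - A - I)) I = sg A I * sg (S - A - I) I" by (rule sg_Un1) (use fin in auto)
  have "sgnL ((A # Q) @ [I]) = sg A (\<Union>(set (Q @ [I]))) * sgnL (Q @ [I])" by simp
  also have "\<dots> = sg A (S - A - I) * sg A I * (sgnL Q * sg (S - A - I) I)" unfolding u1 s1 IH ..
  also have "\<dots> = (sg A (S - A - I) * sgnL Q) * (sg A I * sg (S - A - I) I)" by (simp add: algebra_simps)
  also have "\<dots> = sgnL (A # Q) * sg (S - I) I" unfolding e2 s2 by (simp add: uQ)
  finally show ?case .
qed

definition eps1 :: "nat set \<Rightarrow> int" where
  "eps1 I = (-1) ^ (card I * (card I - 1) div 2)"

lemma eps'_snoc: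
  assumes "opart S (Q @ [I])" "finite S"
  shows "eps' (set (Q @ [I])) = eps' (set Q) * eps1 I"
proof -
  have h: "I \<noteq> {}" "I \<subseteq> S" "opart (S - I) Q" using assms(1) by (auto simp: opart_snoc)
  have "I \<notin> set Q"
  proof
    assume "I \<in> set Q"
    then have "I \<subseteq> S - I" using opart_sub[OF h(3)] by blast
    then show False using h(1) by auto
  qed
  then show ?thesis by (simp add: eps'_def eps1_def power_add)
qed

definition Fs :: "(nat \<Rightarrow> real) \<Rightarrow> nat set \<Rightarrow> int" where
  "Fs lam S = (\<Sum>P\<in>OPpos S lam. (-1) ^ length P * sgnL P * eps' (set P))"

lemma OPpos_empty: "OPpos {} lam = {[]}"
proof -
  have "P = []" if "opart {} P" for P
  proof (cases P)
    case (Cons A Q) then show ?thesis using that unfolding Cons opart_Cons by blast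
  qed simp
  then show ?thesis by (auto simp: OPpos_def pos_def)
qed

lemma Fs_empty: "Fs lam {} = 1"
  by (simp add: Fs_def OPpos_empty eps'_def)

lemma Fs_nonpos:
  assumes "finite S" "S \<noteq> {}" "s_blk S lam \<le> 0"
  shows "Fs lam S = 0"
proof -
  have "OPpos S lam = {}"
  proof (rule ccontr)
    assume "OPpos S lam \<noteq> {}"
    then obtain P where P: "opart S P" "pos lam P" by (auto simp: OPpos_def)
    then have "P \<noteq> []" using assms(2) by auto
    then have "(\<Sum>J\<leftarrow>take (length P) P. s_blk J lam) > 0" using P(2)[unfolded pos_def, rule_format, of "length P"]
      by (simp add: Suc_le_eq)
    then have "s_blk S lam > 0" using sum_list_opart[OF P(1) assms(1)] by simp
    then show False using assms(3) by simp
  qed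
  then show ?thesis by (simp add: Fs_def)
qed

lemma OPpos_decomp:
  assumes fin: "finite S" and pos: "s_blk S lam > 0"
  shows "OPpos S lam = (\<Union>I\<in>Pow S - {{}}. (\<lambda>Q. Q @ [I]) ` OPpos (S - I) lam)"
proof
  show "OPpos S lam \<subseteq> (\<Union>I\<in>Pow S - {{}}. (\<lambda>Q. Q @ [I]) ` OPpos (S - I) lam)"
  proof
    fix P assume "P \<in> OPpos S lam"
    then have P: "opart S P" "pos lam P" by (auto simp: OPpos_def)
    have ne: "S \<noteq> {}" using pos by auto
    show "P \<in> (\<Union>I\<in>Pow S - {{}}. (\<lambda>Q. Q @ [I]) ` OPpos (S - I) lam)"
    proof (cases P rule: rev_exhaust)
      case Nil then show ?thesis using P ne by simp
    next
      case (snoc Q I)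
      then have h: "I \<noteq> {}" "I \<subseteq> S" "opart (S - I) Q" using P by (auto simp: opart_snoc)
      have "pos lam Q" using P(2) snoc by (simp add: pos_snoc)
      then have "Q \<in> OPpos (S - I) lam" using h by (simp add: OPpos_def)
      then show ?thesis using snoc h by blast
    qed
  qed
next
  show "(\<Union>I\<in>Pow S - {{}}. (\<lambda>Q. Q @ [I]) ` OPpos (S - I) lam) \<subseteq> OPpos S lam"
  proof
    fix P assume "P \<in> (\<Union>I\<in>Pow S - {{}}. (\<lambda>Q. Q @ [I]) ` OPpos (S - I) lam)"
    then obtain I Q where I: "I \<in> Pow S - {{}}" and Q: "Q \<in> OPpos (S - I) lam" and P: "P = Q @ [I]" by blast
    have op: "opart S (Q @ [I])" using I Q by (auto simp: opart_snoc OPpos_def)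
    have "(\<Sum>J\<leftarrow>Q @ [I]. s_blk J lam) > 0" using sum_list_opart[OF op fin] pos by simp
    then have "pos lam (Q @ [I])" using Q by (simp add: pos_snoc OPpos_def)
    then show "P \<in> OPpos S lam" using op P by (simp add: OPpos_def)
  qed
qed

lemma Rf_eps1: "finite I \<Longrightarrow> Rf I = eps1 I"
  by (simp add: Rf_def eps1_def)

lemma Fs_pos:
  assumes fin: "finite S" and pos: "s_blk S lam > 0"
  shows "conv (Fs lam) Rf S = 0"
proof -
  let ?w = "\<lambda>P. (-1) ^ length P * sgnL P * eps' (set P)"
  have inj: "inj_on (\<lambda>Q. Q @ [I]) X" for I :: "nat set" and X by (auto simp: inj_on_def)
  have "Fs lam S = (\<Sum>I\<in>Pow S - {{}}. \<Sum>P\<in>(\<lambda>Q. Q @ [I]) ` OPpos (S - I) lam. ?w P)"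
    unfolding Fs_def OPpos_decomp[OF fin pos]
  proof (rule sum.UNION_disjoint)
    show "finite (Pow S - {{}})" using fin by simp
    show "\<forall>I\<in>Pow S - {{}}. finite ((\<lambda>Q. Q @ [I]) ` OPpos (S - I) lam)"
      using fin by (auto intro: finite_OPpos)
    show "\<forall>I\<in>Pow S - {{}}. \<forall>J\<in>Pow S - {{}}. I \<noteq> J \<longrightarrow> (\<lambda>Q. Q @ [I]) ` OPpos (S - I) lam \<inter> (\<lambda>Q. Q @ [J]) ` OPpos (S - J) lam = {}"
      by auto
  qed
  also have "\<dots> = (\<Sum>I\<in>Pow S - {{}}. \<Sum>Q\<in>OPpos (S - I) lam. ?w (Q @ [I]))"
    by (rule sum.cong[OF refl]) (simp add: sum.reindex[OF inj])
  also have "\<dots> = (\<Sum>I\<in>Pow S - {{}}. - (sg (S - I) I * eps1 I * Fs lam (S - I)))"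
  proof (rule sum.cong[OF refl])
    fix I assume I: "I \<in> Pow S - {{}}"
    have "(\<Sum>Q\<in>OPpos (S - I) lam. ?w (Q @ [I])) = (\<Sum>Q\<in>OPpos (S - I) lam. - (sg (S - I) I * eps1 I * ?w Q))"
    proof (rule sum.cong[OF refl])
      fix Q assume Q: "Q \<in> OPpos (S - I) lam"
      have op: "opart S (Q @ [I])" using I Q by (auto simp: opart_snoc OPpos_def)
      show "?w (Q @ [I]) = - (sg (S - I) I * eps1 I * ?w Q)"
        unfolding sgnL_snoc[OF op fin] eps'_snoc[OF op fin] by simp
    qed
    then show "(\<Sum>Q\<in>OPpos (S - I) lam. ?w (Q @ [I])) = - (sg (S - I) I * eps1 I * Fs lam (S - I))"
      by (simp add: Fs_def sum_negf sum_distrib_left)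
  qed
  finally have FsS: "Fs lam S = (\<Sum>I\<in>Pow S - {{}}. - (sg (S - I) I * eps1 I * Fs lam (S - I)))" .
  have "conv (Fs lam) Rf S = (\<Sum>I\<in>Pow S. sg (S - I) I * Fs lam (S - I) * Rf I)" by (rule conv_compl)
  also have "\<dots> = sg (S - {}) {} * Fs lam (S - {}) * Rf {} + (\<Sum>I\<in>Pow S - {{}}. sg (S - I) I * Fs lam (S - I) * Rf I)"
    by (rule sum.remove) (use fin in auto)
  also have "(\<Sum>I\<in>Pow S - {{}}. sg (S - I) I * Fs lam (S - I) * Rf I) = (\<Sum>I\<in>Pow S - {{}}. sg (S - I) I * eps1 I * Fs lam (S - I))"
  proof (rule sum.cong[OF refl])
    fix I assume "I \<in> Pow S - {{}}"
    then have "finite I" using fin by (auto intro: finite_subset)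
    then show "sg (S - I) I * Fs lam (S - I) * Rf I = sg (S - I) I * eps1 I * Fs lam (S - I)"
      by (simp add: Rf_eps1)
  qed
  moreover have "Rf {} = 1" by (simp add: Rf_def)
  ultimately show ?thesis using FsS by (simp add: sum_negf)
qed

lemma Fs_Hf: "finite S \<Longrightarrow> Fs lam S = Hf lam S"
  by (rule uniqueness[where lam=lam])
     (auto simp: Fs_empty Hf_empty Fs_nonpos Hf_nonpos Fs_pos Hf_pos)

primrec invs :: "nat list \<Rightarrow> nat" where
  "invs [] = 0"
| "invs (x # xs) = card {y \<in> set xs. y < x} + invs xs"

lemma invs_append: "distinct (xs @ ys) \<Longrightarrow> invs (xs @ ys) = invs xs + invs ys + ninv (set xs) (set ys)"
proof (induction xs)
  case Nil then show ?case by (simp add: ninv_def)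
next
  case (Cons x xs)
  have d: "distinct (xs @ ys)" "x \<notin> set xs" "x \<notin> set ys" "set xs \<inter> set ys = {}" using Cons.prems by auto
  have c: "card {y \<in> set (xs @ ys). y < x} = card {y \<in> set xs. y < x} + card {y \<in> set ys. y < x}"
  proof -
    have "{y \<in> set (xs @ ys). y < x} = {y \<in> set xs. y < x} \<union> {y \<in> set ys. y < x}" by auto
    then show ?thesis using d(4) by (simp add: card_Un_disjoint disjoint_iff)
  qed
  have n: "ninv (set (x # xs)) (set ys) = card {b \<in> set ys. b < x} + ninv (set xs) (set ys)"
  proof -
    have "ninv ({x} \<union> set xs) (set ys) = ninv {x} (set ys) + ninv (set xs) (set ys)"
      by (rule ninv_Un1) (use d in auto)
    then show ?thesis by (simp add: ninv_single1)
  qed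
  show ?case using Cons.IH[OF d(1)] c n by simp
qed

lemma invs_sorted: "sorted xs \<Longrightarrow> invs xs = 0"
proof (induction xs)
  case (Cons x xs)
  then have "{y \<in> set xs. y < x} = {}" by (auto simp: not_less)
  then show ?case using Cons by simp
qed simp

lemma invs_zero_sorted: "invs xs = 0 \<Longrightarrow> sorted xs"
proof (induction xs)
  case (Cons x xs)
  then have "card {y \<in> set xs. y < x} = 0" "invs xs = 0" by auto
  then have "{y \<in> set xs. y < x} = {}" by simp
  then have "\<forall>y\<in>set xs. x \<le> y" by (auto simp: not_less[symmetric])
  then show ?case using Cons \<open>invs xs = 0\<close> by simp
qed simp

lemma descent: "\<not> sorted (xs :: nat list) \<Longrightarrow> \<exists>us a b vs. xs = us @ a # b # vs \<and> b < a"
proof (induction xs)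
  case Nil then show ?case by simp
next
  case (Cons x xs)
  note np = Cons.prems and IH = Cons.IH
  show ?case
  proof (cases xs)
    case Nil then show ?thesis using np by simp
  next
    case (Cons y zs)
    show ?thesis
    proof (cases "y < x")
      case True then show ?thesis using Cons by (intro exI[of _ "[]"]) auto
    next
      case False
      have "\<not> sorted xs"
      proof
        assume sx: "sorted xs"
        have "\<forall>z\<in>set xs. x \<le> z" using sx False Cons by (auto simp: not_less intro: order.trans)
        then have "sorted (x # xs)" using sx by simp
        with np show False by simp
      qed
      then obtain us a b vs where "xs = us @ a # b # vs" "b < a" using IH by blast
      then show ?thesis by (intro exI[of _ "x # us"]) auto
    qed
  qed
qed

lemma invs_swap:
  assumes "distinct (us @ a # b # vs)" "b < a"
  shows "invs (us @ a # b # vs) = Suc (invs (us @ b # a # vs))"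
  using assms
proof (induction us)
  case Nil
  have fin: "finite (set vs)" by simp
  have ab: "a \<notin> set vs" "b \<notin> set vs" using Nil by auto
  have "{y \<in> set (b # vs). y < a} = insert b {y \<in> set vs. y < a}" using Nil by auto
  then have c1: "card {y \<in> set (b # vs). y < a} = Suc (card {y \<in> set vs. y < a})" using ab by simp
  have "{y \<in> set (a # vs). y < b} = {y \<in> set vs. y < b}" using Nil by auto
  then show ?case using c1 by simp
next
  case (Cons u us)
  have "set (us @ a # b # vs) = set (us @ b # a # vs)" by auto
  then show ?case using Cons by simp
qed

definition pf :: "nat \<Rightarrow> nat list \<Rightarrow> nat \<Rightarrow> nat" where
  "pf n xs = (\<lambda>j. if 1 \<le> j \<and> j \<le> n then xs ! (j - 1) else j)"

lemma pf_permutes: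
  assumes d: "distinct xs" and s: "set xs = {1..n}"
  shows "pf n xs permutes {1..n}"
proof (rule bij_imp_permutes)
  have len: "length xs = n" using distinct_card[OF d] s by simp
  show "bij_betw (pf n xs) {1..n} {1..n}"
  proof (rule bij_betw_imageI)
    show "inj_on (pf n xs) {1..n}"
    proof (rule inj_onI)
      fix i j assume i: "i \<in> {1..n}" and j: "j \<in> {1..n}" and e: "pf n xs i = pf n xs j"
      then have "xs ! (i - 1) = xs ! (j - 1)" by (simp add: pf_def)
      then have "i - 1 = j - 1" using nth_eq_iff_index_eq[OF d, of "i - 1" "j - 1"] i j len by auto
      then show "i = j" using i j by auto
    qed
    show "pf n xs ` {1..n} = {1..n}"
    proof
      show "pf n xs ` {1..n} \<subseteq> {1..n}"
      proof
        fix y assume "y \<in> pf n xs ` {1..n}"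
        then obtain j where j: "j \<in> {1..n}" "y = pf n xs j" by blast
        then have "y = xs ! (j - 1)" by (simp add: pf_def)
        moreover have "j - 1 < length xs" using j len by auto
        ultimately show "y \<in> {1..n}" using s by (metis nth_mem)
      qed
      show "{1..n} \<subseteq> pf n xs ` {1..n}"
      proof
        fix y assume "y \<in> {1..n}"
        then have "y \<in> set xs" using s by simp
        then obtain k where k: "k < length xs" "xs ! k = y" by (auto simp: in_set_conv_nth)
        then have "pf n xs (k + 1) = y" using len by (simp add: pf_def)
        moreover have "k + 1 \<in> {1..n}" using k len by auto
        ultimately show "y \<in> pf n xs ` {1..n}" by (metis imageI)
      qed
    qed
  qed
  show "\<And>x. x \<notin> {1..n} \<Longrightarrow> pf n xs x = x" by (auto simp: pf_def)
qed

lemma pf_swap: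
  assumes len: "length (us @ a # b # vs) = n"
  shows "pf n (us @ a # b # vs) = pf n (us @ b # a # vs) \<circ> Transposition.transpose (length us + 1) (length us + 2)"
proof
  fix j
  let ?p = "length us"
  show "pf n (us @ a # b # vs) j = (pf n (us @ b # a # vs) \<circ> Transposition.transpose (?p + 1) (?p + 2)) j"
  proof (cases "j = ?p + 1")
    case True then show ?thesis using len by (simp add: pf_def nth_append)
  next
    case F1: False
    show ?thesis
    proof (cases "j = ?p + 2")
      case True then show ?thesis using len by (simp add: pf_def nth_append)
    next
      case F2: False
      then have t: "Transposition.transpose (?p + 1) (?p + 2) j = j" using F1 by simp
      have "(us @ a # b # vs) ! (j - 1) = (us @ b # a # vs) ! (j - 1)" if "1 \<le> j"
      proof (cases "j - 1 < ?p")
        case True then show ?thesis by (simp add: nth_append)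
      next
        case False
        have "j - 1 = ?p + 2 + (j - 1 - (?p + 2))" using F1 F2 that False by arith
        then obtain k where k: "j - 1 = ?p + 2 + k" by blast
        then show ?thesis by (simp add: nth_append)
      qed
      then show ?thesis using t by (simp add: pf_def)
    qed
  qed
qed

lemma sign_pf: "distinct xs \<Longrightarrow> set xs = {1..n} \<Longrightarrow> sign (pf n xs) = (-1) ^ invs xs"
proof (induction "invs xs" arbitrary: xs)
  case 0
  then have "sorted xs" using invs_zero_sorted by simp
  have su: "set [1..<Suc n] = {1..n}" by auto
  have "xs = [1..<Suc n]"
  proof (rule sorted_distinct_set_unique)
    show "sorted xs" by fact
    show "distinct xs" by (rule "0.prems"(1))
    show "sorted [1..<Suc n]" by (rule sorted_upt)
    show "distinct [1..<Suc n]" by (rule distinct_upt)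
    show "set xs = set [1..<Suc n]" unfolding su by (rule "0.prems"(2))
  qed
  then have "pf n xs = id" by (auto simp: pf_def fun_eq_iff nth_upt simp del: upt_Suc)
  then show ?case using 0 by simp
next
  case (Suc m)
  then have "\<not> sorted xs" using invs_sorted by fastforce
  then obtain us a b vs where xs: "xs = us @ a # b # vs" and ba: "b < a" using descent by blast
  define ys where "ys = us @ b # a # vs"
  have dys: "distinct ys" using Suc.prems(1) by (auto simp: xs ys_def)
  have sys: "set ys = {1..n}" using Suc.prems(2) by (auto simp: xs ys_def)
  have "invs xs = Suc (invs ys)" unfolding xs ys_def by (rule invs_swap) (use Suc.prems xs ba in auto)
  then have iy: "m = invs ys" using Suc.hyps(2) by simp
  have len: "length xs = n" using distinct_card[OF Suc.prems(1)] Suc.prems(2) by simp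
  have "pf n xs = pf n ys \<circ> Transposition.transpose (length us + 1) (length us + 2)"
    unfolding xs ys_def by (rule pf_swap) (use len xs in simp)
  then have "sign (pf n xs) = sign (pf n ys) * sign (Transposition.transpose (length us + 1) (length us + 2))"
    using sign_compose[OF permutes_imp_permutation[OF _ pf_permutes[OF dys sys]] permutation_swap_id] by simp
  also have "\<dots> = (-1) ^ m * (-1)" using Suc.hyps(1)[OF iy dys sys] iy by (simp add: sign_swap_id)
  finally show ?case using Suc.hyps(2)[symmetric] by simp
qed

lemma distinct_concat_opart: "opart S P \<Longrightarrow> finite S \<Longrightarrow> distinct (concat (map sorted_list_of_set P)) \<and> set (concat (map sorted_list_of_set P)) = S"
proof (induction P arbitrary: S)
  case Nil then show ?case by simp
next
  case (Cons A Q)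
  have h: "A \<noteq> {}" "A \<subseteq> S" "opart (S - A) Q" using Cons.prems(1) by (auto simp: opart_Cons)
  have fA: "finite A" using h Cons.prems(2) by (auto intro: finite_subset)
  have IH: "distinct (concat (map sorted_list_of_set Q)) \<and> set (concat (map sorted_list_of_set Q)) = S - A"
    using Cons.IH[OF h(3)] Cons.prems(2) by simp
  show ?case using IH fA h(2) by auto
qed

lemma invs_concat: "opart S P \<Longrightarrow> finite S \<Longrightarrow> (-1::int) ^ invs (concat (map sorted_list_of_set P)) = sgnL P"
proof (induction P arbitrary: S)
  case Nil then show ?case by simp
next
  case (Cons A Q)
  have h: "A \<noteq> {}" "A \<subseteq> S" "opart (S - A) Q" using Cons.prems(1) by (auto simp: opart_Cons)
  have fA: "finite A" using h Cons.prems(2) by (auto intro: finite_subset)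
  have dc: "distinct (concat (map sorted_list_of_set (A # Q)))" and sQ: "set (concat (map sorted_list_of_set Q)) = S - A"
    using distinct_concat_opart[OF Cons.prems] distinct_concat_opart[OF h(3)] Cons.prems(2) by auto
  have uQ: "\<Union>(set Q) = S - A" using h(3) by (simp add: opart_def)
  have "invs (concat (map sorted_list_of_set (A # Q))) = invs (sorted_list_of_set A) + invs (concat (map sorted_list_of_set Q)) + ninv A (S - A)"
    using invs_append[of "sorted_list_of_set A" "concat (map sorted_list_of_set Q)"] dc fA sQ by simp
  then have "(-1::int) ^ invs (concat (map sorted_list_of_set (A # Q))) = (-1) ^ invs (concat (map sorted_list_of_set Q)) * sg A (S - A)"
    by (simp add: invs_sorted power_add sg_def)
  also have "\<dots> = sgnL (A # Q)" using Cons.IH[OF h(3)] Cons.prems(2) uQ by simp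
  finally show ?case .
qed

lemma eps_ord_sgnL:
  assumes "opart {1..n} P"
  shows "eps_ord n P = sgnL P"
proof -
  let ?xs = "concat (map sorted_list_of_set P)"
  have d: "distinct ?xs" "set ?xs = {1..n}" using distinct_concat_opart[OF assms] by auto
  have si: "sigma_inv n P = pf n ?xs" by (simp add: sigma_inv_def pf_def)
  have perm: "permutation (pf n ?xs)" by (rule permutes_imp_permutation[OF _ pf_permutes[OF d]]) simp
  have "eps_ord n P = sign (inv (pf n ?xs))" by (simp add: eps_ord_def sigma_P_def si)
  also have "\<dots> = sign (pf n ?xs)" by (rule sign_inverse[OF perm])
  also have "\<dots> = (-1) ^ invs ?xs" by (rule sign_pf[OF d])
  also have "\<dots> = sgnL P" by (rule invs_concat[OF assms]) simp
  finally show ?thesis .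
qed

definition goodp :: "nat set set \<Rightarrow> bool" where
  "goodp p \<longleftrightarrow> (\<forall>A\<in>p. finite A) \<and> (\<forall>A\<in>p. \<forall>B\<in>p. A \<noteq> B \<longrightarrow> A \<inter> B = {} \<and> sg A B = sg B A)"

lemma goodp_D: "goodp p \<Longrightarrow> A \<in> p \<Longrightarrow> B \<in> p \<Longrightarrow> A \<noteq> B \<Longrightarrow> A \<inter> B = {}"
  unfolding goodp_def by blast

lemma goodp_sym: "goodp p \<Longrightarrow> A \<in> p \<Longrightarrow> B \<in> p \<Longrightarrow> A \<noteq> B \<Longrightarrow> sg A B = sg B A"
  unfolding goodp_def by blast

lemma goodp_fin: "goodp p \<Longrightarrow> A \<in> p \<Longrightarrow> finite A"
  unfolding goodp_def by blast

lemma goodp_sub: "goodp p \<Longrightarrow> q \<subseteq> p \<Longrightarrow> goodp q"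
  unfolding goodp_def by blast

lemma sgnL_remove:
  assumes "distinct Ps" "A \<in> set Ps" "goodp (set Ps)"
  shows "sgnL Ps = sg A (\<Union>(set Ps - {A})) * sgnL (remove1 A Ps)"
  using assms
proof (induction Ps)
  case Nil then show ?case by simp
next
  case (Cons B Rs)
  note g = Cons.prems(3)
  show ?case
  proof (cases "A = B")
    case True
    then have "set (B # Rs) - {A} = set Rs" using Cons.prems(1) by auto
    then show ?thesis using True by simp
  next
    case False
    then have ARs: "A \<in> set Rs" using Cons.prems(2) by simp
    have gR: "goodp (set Rs)" using goodp_sub[OF g] by auto
    have dR: "distinct Rs" "B \<notin> set Rs" using Cons.prems(1) by auto
    have IH: "sgnL Rs = sg A (\<Union>(set Rs - {A})) * sgnL (remove1 A Rs)"
      using Cons.IH[OF dR(1) ARs gR] .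
    have Ain: "A \<in> set (B # Rs)" and Bin: "B \<in> set (B # Rs)" using ARs by auto
    have symAB: "sg A B = sg B A" by (rule goodp_sym[OF g Ain Bin False])
    define X where "X = \<Union>(set Rs - {A})"
    have fX: "finite X" unfolding X_def using goodp_fin[OF gR] by auto
    have fA: "finite A" "finite B" using goodp_fin[OF g Ain] goodp_fin[OF g Bin] by auto
    have uR: "\<Union>(set Rs) = A \<union> X" using ARs by (auto simp: X_def)
    have AC: "A \<inter> C = {}" if C: "C \<in> set Rs - {A}" for C
      using goodp_D[OF gR ARs, of C] C by auto
    have AX: "A \<inter> X = {}" using AC by (auto simp: X_def)
    have BC: "B \<inter> C = {}" if C: "C \<in> set Rs - {A}" for C
    proof -
      have "C \<in> set (B # Rs)" "C \<noteq> B" using C dR(2) by auto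
      then show ?thesis using goodp_D[OF g Bin, of C] by auto
    qed
    have BX: "B \<inter> X = {}" using BC by (auto simp: X_def)
    have s1: "sg B (A \<union> X) = sg B A * sg B X" by (rule sg_Un2) (use fA fX AX in auto)
    have e2: "\<Union>(set (B # Rs) - {A}) = B \<union> X" using False dR(2) by (auto simp: X_def)
    have s2: "sg A (B \<union> X) = sg A B * sg A X" by (rule sg_Un2) (use fA fX BX in auto)
    have e3: "\<Union>(set (remove1 A Rs)) = X" using dR(1) by (simp add: X_def)
    have "sgnL (B # Rs) = sg B (A \<union> X) * (sg A X * sgnL (remove1 A Rs))"
      using IH uR by (simp add: X_def)
    also have "\<dots> = sg A (B \<union> X) * (sg B X * sgnL (remove1 A Rs))"
      unfolding s1 s2 symAB by (simp add: algebra_simps)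
    also have "\<dots> = sg A (\<Union>(set (B # Rs) - {A})) * sgnL (remove1 A (B # Rs))"
      using False e2 e3 by simp
    finally show ?thesis .
  qed
qed

lemma sgnL_perm:
  "distinct Qs \<Longrightarrow> distinct Ps \<Longrightarrow> set Ps = set Qs \<Longrightarrow> goodp (set Ps) \<Longrightarrow> sgnL Ps = sgnL Qs"
proof (induction Qs arbitrary: Ps)
  case Nil then show ?case by simp
next
  case (Cons A Qs)
  have A: "A \<in> set Ps" using Cons.prems(3) by simp
  have r: "sgnL Ps = sg A (\<Union>(set Ps - {A})) * sgnL (remove1 A Ps)"
    by (rule sgnL_remove[OF Cons.prems(2) A Cons.prems(4)])
  have sr: "set (remove1 A Ps) = set Qs" using Cons.prems(1-3) by auto
  have gr: "goodp (set (remove1 A Ps))" using goodp_sub[OF Cons.prems(4)] by (simp add: sr Cons.prems(3) subset_insertI)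
  have "sgnL (remove1 A Ps) = sgnL Qs"
    using Cons.IH[of "remove1 A Ps"] Cons.prems sr gr by simp
  moreover have "set Ps - {A} = set Qs" using Cons.prems(1,3) by auto
  ultimately show ?case using r by simp
qed

definition sgnP :: "nat set set \<Rightarrow> int" where
  "sgnP p = sgnL (SOME Ps. distinct Ps \<and> set Ps = p)"

lemma some_list: "finite p \<Longrightarrow> distinct (SOME Ps. distinct Ps \<and> set Ps = p) \<and> set (SOME Ps. distinct Ps \<and> set Ps = p) = p"
  by (rule someI_ex) (metis finite_distinct_list)

lemma sgnP_list: "finite p \<Longrightarrow> distinct Ps \<Longrightarrow> set Ps = p \<Longrightarrow> goodp p \<Longrightarrow> sgnP p = sgnL Ps"
  unfolding sgnP_def
  by (rule sgnL_perm) (use some_list[of p] in auto)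

lemma sgnP_empty: "sgnP {} = 1"
  using sgnP_list[of "{}" "[]"] by (simp add: goodp_def)

lemma sgnP_insert:
  assumes "finite p" "B \<notin> p" "goodp (insert B p)"
  shows "sgnP (insert B p) = sg B (\<Union>p) * sgnP p"
proof -
  define Ps where "Ps = (SOME Ps. distinct Ps \<and> set Ps = p)"
  have Ps: "distinct Ps" "set Ps = p" using some_list[OF assms(1)] by (auto simp: Ps_def)
  have "sgnP (insert B p) = sgnL (B # Ps)"
    by (rule sgnP_list) (use assms Ps in auto)
  also have "\<dots> = sg B (\<Union>p) * sgnP p" using Ps by (simp add: sgnP_def Ps_def)
  finally show ?thesis .
qed

definition ispart :: "nat set \<Rightarrow> nat set set \<Rightarrow> bool" where
  "ispart S p \<longleftrightarrow> (\<forall>I\<in>p. I \<noteq> {}) \<and> (\<forall>I\<in>p. \<forall>J\<in>p. I \<noteq> J \<longrightarrow> I \<inter> J = {}) \<and> \<Union>p = S"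

definition PM :: "nat set \<Rightarrow> nat set set set" where
  "PM S = {p. ispart S p \<and> (\<forall>I\<in>p. card I = 2)}"

lemma goodp_PM_ins:
  assumes "ispart S p" "\<forall>I\<in>p. card I = 2 \<or> card I = 1" "card {I \<in> p. odd (card I)} \<le> 1" "finite {I \<in> p. odd (card I)}"
  shows "goodp p"
  unfolding goodp_def
proof (intro conjI ballI impI)
  fix A assume "A \<in> p"
  then show "finite A" using assms(2) by (metis card.infinite zero_neq_numeral zero_neq_one)
next
  fix A B assume A: "A \<in> p" and B: "B \<in> p" and AB: "A \<noteq> B"
  show "A \<inter> B = {}" using assms(1) A B AB by (simp add: ispart_def)
  have fA: "finite A" "finite B" using assms(2) A B by (metis card.infinite zero_neq_numeral zero_neq_one)+
  have "even (card A * card B)"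
  proof (rule ccontr)
    assume "odd (card A * card B)"
    then have "odd (card A)" "odd (card B)" by auto
    then have "{A, B} \<subseteq> {I \<in> p. odd (card I)}" using A B by auto
    then have "card {A, B} \<le> card {I \<in> p. odd (card I)}" using assms(4) by (rule card_mono[rotated])
    then show False using AB assms(3) by simp
  qed
  then show "sg A B = sg B A" using sg_sym[OF fA \<open>A \<inter> B = {}\<close>] by simp
qed

lemma PM_finite: "finite S \<Longrightarrow> finite (PM S)"
  by (rule finite_subset[of _ "Pow (Pow S)"]) (auto simp: PM_def ispart_def)

lemma PM_elem_finite: "p \<in> PM S \<Longrightarrow> finite S \<Longrightarrow> finite p"
  by (rule finite_subset[of _ "Pow S"]) (auto simp: PM_def ispart_def)

lemma PM_empty: "PM {} = {{}}"
  by (auto simp: PM_def ispart_def)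

lemma goodp_PM: "p \<in> PM S \<Longrightarrow> goodp p"
proof -
  assume p: "p \<in> PM S"
  have e: "{I \<in> p. odd (card I)} = {}" using p by (auto simp: PM_def)
  have c1: "card {I \<in> p. odd (card I)} \<le> 1" unfolding e by simp
  have c2: "finite {I \<in> p. odd (card I)}" unfolding e by simp
  have i: "ispart S p" "\<forall>I\<in>p. card I = 2 \<or> card I = 1" using p by (auto simp: PM_def)
  show ?thesis by (rule goodp_PM_ins[OF i c1 c2])
qed

lemma PM_decomp:
  assumes fU: "finite U" and lt: "\<forall>u\<in>U. u < x"
  shows "PM (insert x U) = (\<Union>y\<in>U. insert {y, x} ` PM (U - {y}))"
proof
  have xU: "x \<notin> U" using lt by auto
  show "PM (insert x U) \<subseteq> (\<Union>y\<in>U. insert {y, x} ` PM (U - {y}))"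
  proof
    fix p assume p: "p \<in> PM (insert x U)"
    then have ip: "ispart (insert x U) p" and c2: "\<forall>I\<in>p. card I = 2" by (auto simp: PM_def)
    have "x \<in> \<Union>p" using ip by (simp add: ispart_def)
    then obtain B where B: "B \<in> p" "x \<in> B" by blast
    have "card B = 2" using c2 B by simp
    then obtain u v where uv: "B = {u, v}" "u \<noteq> v" by (auto simp: card_2_iff)
    obtain y where By: "B = {y, x}" "y \<noteq> x" using uv B(2) by auto
    have BS: "B \<subseteq> insert x U" using ip B(1) by (auto simp: ispart_def)
    then have yU: "y \<in> U" using By by auto
    define p' where "p' = p - {B}"
    have djB: "B \<inter> C = {}" if "C \<in> p'" for C using ip B(1) that by (auto simp: ispart_def p'_def)
    have "\<Union>p' = U - {y}"
    proof
      show "\<Union>p' \<subseteq> U - {y}"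
      proof
        fix z assume "z \<in> \<Union>p'"
        then obtain C where C: "C \<in> p'" "z \<in> C" by blast
        then have "z \<in> insert x U" using ip by (auto simp: ispart_def p'_def)
        moreover have "z \<notin> B" using djB[OF C(1)] C(2) by auto
        ultimately show "z \<in> U - {y}" using By by auto
      qed
      show "U - {y} \<subseteq> \<Union>p'"
      proof
        fix z assume z: "z \<in> U - {y}"
        then have "z \<in> \<Union>p" using ip by (auto simp: ispart_def)
        then obtain C where C: "C \<in> p" "z \<in> C" by blast
        have "z \<notin> B" using z xU By by auto
        then have "C \<noteq> B" using C by auto
        then show "z \<in> \<Union>p'" using C by (auto simp: p'_def)
      qed
    qed
    then have "p' \<in> PM (U - {y})" using ip c2 by (auto simp: PM_def ispart_def p'_def)
    moreover have "p = insert {y, x} p'" using B(1) By by (auto simp: p'_def)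
    ultimately show "p \<in> (\<Union>y\<in>U. insert {y, x} ` PM (U - {y}))" using yU by blast
  qed
  show "(\<Union>y\<in>U. insert {y, x} ` PM (U - {y})) \<subseteq> PM (insert x U)"
  proof
    fix p assume "p \<in> (\<Union>y\<in>U. insert {y, x} ` PM (U - {y}))"
    then obtain y p' where y: "y \<in> U" and p': "p' \<in> PM (U - {y})" and p: "p = insert {y, x} p'" by blast
    have ip: "ispart (U - {y}) p'" and c2: "\<forall>I\<in>p'. card I = 2" using p' by (auto simp: PM_def)
    have yx: "y \<noteq> x" using y xU by auto
    have sub: "C \<subseteq> U - {y}" if "C \<in> p'" for C using ip that by (auto simp: ispart_def)
    have "ispart (insert x U) p"
      unfolding ispart_def p
    proof (intro conjI ballI impI)
      fix I assume "I \<in> insert {y, x} p'"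
      then show "I \<noteq> {}" using ip by (auto simp: ispart_def)
    next
      fix I J assume I: "I \<in> insert {y, x} p'" and J: "J \<in> insert {y, x} p'" and IJ: "I \<noteq> J"
      show "I \<inter> J = {}"
      proof (cases "I = {y, x}")
        case True
        then have "J \<in> p'" using J IJ by auto
        then show ?thesis using sub[of J] True xU by auto
      next
        case F: False
        then have "I \<in> p'" using I by auto
        show ?thesis
        proof (cases "J = {y, x}")
          case True then show ?thesis using sub[OF \<open>I \<in> p'\<close>] xU by auto
        next
          case False then have "J \<in> p'" using J by auto
          then show ?thesis using ip \<open>I \<in> p'\<close> IJ by (auto simp: ispart_def)
        qed
      qed
    next
      have "\<Union>p' = U - {y}" using ip by (simp add: ispart_def)
      then show "\<Union>(insert {y, x} p') = insert x U" using y by auto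
    qed
    moreover have "\<forall>I\<in>p. card I = 2" using c2 yx p by auto
    ultimately show "p \<in> PM (insert x U)" by (simp add: PM_def)
  qed
qed

lemma PM_W0:
  fixes c :: "nat \<Rightarrow> nat \<Rightarrow> int"
  shows "finite S \<Longrightarrow> (\<Sum>p\<in>PM S. sgnP p * (\<Prod>B\<in>p. c (Min B) (Max B))) = W0 c S"
proof (induction "card S" arbitrary: S rule: less_induct)
  case less
  show ?case
  proof (cases "S = {}")
    case True then show ?thesis by (simp add: PM_empty sgnP_empty)
  next
    case ne: False
    obtain x U where d: "S = insert x U" "x \<notin> U" "finite U" "\<forall>u\<in>U. u < x" "card S = Suc (card U)"
      using max_decomp[of S] less.prems ne by blast
    let ?F = "\<lambda>p. sgnP p * (\<Prod>B\<in>p. c (Min B) (Max B))"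
    have inj: "inj_on (insert {y, x}) (PM (U - {y}))" for y
    proof (rule inj_onI)
      fix p q assume p: "p \<in> PM (U - {y})" and q: "q \<in> PM (U - {y})" and e: "insert {y, x} p = insert {y, x} q"
      have "{y, x} \<notin> p" using p d(2) by (auto simp: PM_def ispart_def)
      moreover have "{y, x} \<notin> q" using q d(2) by (auto simp: PM_def ispart_def)
      ultimately show "p = q" using e by (metis insert_ident)
    qed
    have "(\<Sum>p\<in>PM S. ?F p) = (\<Sum>y\<in>U. \<Sum>p\<in>insert {y, x} ` PM (U - {y}). ?F p)"
      unfolding d(1) PM_decomp[OF d(3) d(4)]
    proof (rule sum.UNION_disjoint)
      show "finite U" by (rule d(3))
      show "\<forall>y\<in>U. finite (insert {y, x} ` PM (U - {y}))" using d(3) by (auto intro: PM_finite)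
      show "\<forall>y\<in>U. \<forall>z\<in>U. y \<noteq> z \<longrightarrow> insert {y, x} ` PM (U - {y}) \<inter> insert {z, x} ` PM (U - {z}) = {}"
      proof (intro ballI impI)
        fix y z assume y: "y \<in> U" and z: "z \<in> U" and yz: "y \<noteq> z"
        show "insert {y, x} ` PM (U - {y}) \<inter> insert {z, x} ` PM (U - {z}) = {}"
        proof (rule ccontr)
          assume "insert {y, x} ` PM (U - {y}) \<inter> insert {z, x} ` PM (U - {z}) \<noteq> {}"
          then obtain p q where p: "p \<in> PM (U - {y})" and q: "q \<in> PM (U - {z})" and e: "insert {y, x} p = insert {z, x} q"
            by blast
          have "{y, x} \<in> insert {z, x} q" using e by blast
          moreover have "{y, x} \<noteq> {z, x}" using yz by (auto simp: doubleton_eq_iff)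
          ultimately have "{y, x} \<in> q" by simp
          then have "x \<in> U - {z}" using q by (auto simp: PM_def ispart_def)
          then show False using d(2) by simp
        qed
      qed
    qed
    also have "\<dots> = (\<Sum>y\<in>U. \<Sum>p\<in>PM (U - {y}). ?F (insert {y, x} p))"
      by (rule sum.cong[OF refl]) (simp add: sum.reindex[OF inj])
    also have "\<dots> = (\<Sum>y\<in>U. (-1) ^ card {z \<in> U. y < z} * c y x * (\<Sum>p\<in>PM (U - {y}). ?F p))"
    proof (rule sum.cong[OF refl])
      fix y assume y: "y \<in> U"
      have yx: "y < x" using d(4) y by simp
      have sgn: "sg {y, x} (U - {y}) = (-1) ^ card {z \<in> U. y < z}"
      proof -
        have fV: "finite (U - {y})" using d(3) by simp
        have "sg ({y} \<union> {x}) (U - {y}) = sg {y} (U - {y}) * sg {x} (U - {y})"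
          by (rule sg_Un1) (use fV yx in auto)
        moreover have "{b \<in> U - {y}. b < x} = U - {y}" using d(4) by auto
        moreover have "card (U - {y}) = card {b \<in> U - {y}. b < y} + card {b \<in> U - {y}. y < b}"
          by (rule card_lt_gt) (use fV in auto)
        moreover have "{b \<in> U - {y}. y < b} = {z \<in> U. y < z}" by auto
        ultimately have "sg {y, x} (U - {y}) = (-1) ^ card {b \<in> U - {y}. b < y} * (-1) ^ (card {b \<in> U - {y}. b < y} + card {z \<in> U. y < z})"
          by (simp add: sg_single1 insert_commute)
        also have "\<dots> = (-1) ^ card {z \<in> U. y < z}" by (simp add: power_add mult.assoc[symmetric])
        finally show ?thesis .
      qed
      show "(\<Sum>p\<in>PM (U - {y}). ?F (insert {y, x} p)) = (-1) ^ card {z \<in> U. y < z} * c y x * (\<Sum>p\<in>PM (U - {y}). ?F p)"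
        unfolding sum_distrib_left
      proof (rule sum.cong[OF refl])
        fix p assume p: "p \<in> PM (U - {y})"
        have fp: "finite p" using PM_elem_finite[OF p] d(3) by simp
        have nB: "{y, x} \<notin> p" using p d(2) by (auto simp: PM_def ispart_def)
        have up: "\<Union>p = U - {y}" using p by (simp add: PM_def ispart_def)
        have "insert {y, x} p \<in> PM (insert x U)" unfolding PM_decomp[OF d(3) d(4)] using y p by blast
        then have g: "goodp (insert {y, x} p)" by (rule goodp_PM)
        have sp: "sgnP (insert {y, x} p) = sg {y, x} (U - {y}) * sgnP p"
          using sgnP_insert[OF fp nB g] up by simp
        have mm: "Min {y, x} = y" "Max {y, x} = x" using yx by auto
        have pr: "(\<Prod>B\<in>insert {y, x} p. c (Min B) (Max B)) = c y x * (\<Prod>B\<in>p. c (Min B) (Max B))"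
          using fp nB mm by simp
        show "?F (insert {y, x} p) = (-1) ^ card {z \<in> U. y < z} * c y x * ?F p"
          unfolding sp pr sgn by (simp add: algebra_simps)
      qed
    qed
    also have "\<dots> = (\<Sum>y\<in>U. (-1) ^ card {z \<in> U. y < z} * c y x * W0 c (U - {y}))"
    proof (rule sum.cong[OF refl])
      fix y assume y: "y \<in> U"
      have "card (U - {y}) < card S" using d y by (simp add: card_Diff1_less less_SucI)
      then show "(-1) ^ card {z \<in> U. y < z} * c y x * (\<Sum>p\<in>PM (U - {y}). ?F p) = (-1) ^ card {z \<in> U. y < z} * c y x * W0 c (U - {y})"
        using less.hyps d(3) by simp
    qed
    also have "\<dots> = W0 c S" unfolding d(1) by (rule W0_ins[symmetric]) (use d in auto)
    finally show ?thesis .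
  qed
qed

definition Mt :: "nat set \<Rightarrow> nat set set set" where
  "Mt S = {p. ispart S p \<and> card {I \<in> p. odd (card I)} \<le> 1 \<and> (\<forall>I\<in>p. card I \<le> 2)}"

lemma P0_le2_Mt: "P0_le2 n = Mt {1..n}"
  by (auto simp: P0_le2_def P0_def Mt_def is_partition_def ispart_def)

lemma sum_parity: "finite A \<Longrightarrow> even (sum (f :: 'a \<Rightarrow> nat) A) \<longleftrightarrow> even (card {x \<in> A. odd (f x)})"
proof (induction A rule: finite_induct)
  case empty then show ?case by simp
next
  case (insert x A)
  show ?case
  proof (cases "odd (f x)")
    case True
    then have "{y \<in> insert x A. odd (f y)} = insert x {y \<in> A. odd (f y)}" by auto
    moreover have "x \<notin> {y \<in> A. odd (f y)}" "finite {y \<in> A. odd (f y)}" using insert by auto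
    ultimately show ?thesis using insert True by simp
  next
    case False
    then have "{y \<in> insert x A. odd (f y)} = {y \<in> A. odd (f y)}" by auto
    then show ?thesis using insert False by simp
  qed
qed

lemma ispart_card:
  assumes "ispart S p" "finite S"
  shows "card S = sum card p"
proof -
  have "pairwise disjnt p" using assms(1) by (auto simp: ispart_def pairwise_def disjnt_def)
  moreover have "\<And>A. A \<in> p \<Longrightarrow> finite A" using assms by (auto simp: ispart_def intro: finite_subset)
  ultimately have "card (\<Union>p) = sum card p" by (rule card_Union_disjoint)
  then show ?thesis using assms(1) by (simp add: ispart_def)
qed

lemma ispart_finite: "ispart S p \<Longrightarrow> finite S \<Longrightarrow> finite p"
  by (rule finite_subset[of _ "Pow S"]) (auto simp: ispart_def)

lemma Mt_parity:
  assumes p: "p \<in> Mt S" and fin: "finite S"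
  shows "even (card S) \<longleftrightarrow> card {I \<in> p. odd (card I)} = 0"
proof -
  have ip: "ispart S p" and c: "card {I \<in> p. odd (card I)} \<le> 1" using p by (auto simp: Mt_def)
  have fp: "finite p" by (rule ispart_finite[OF ip fin])
  have "even (card S) \<longleftrightarrow> even (card {I \<in> p. odd (card I)})"
    unfolding ispart_card[OF ip fin] by (rule sum_parity[OF fp])
  then show ?thesis using c by auto
qed

lemma Mt_even:
  assumes fin: "finite S" and ev: "even (card S)"
  shows "Mt S = PM S"
proof
  show "Mt S \<subseteq> PM S"
  proof
    fix p assume p: "p \<in> Mt S"
    have ip: "ispart S p" and le: "\<forall>I\<in>p. card I \<le> 2" using p by (auto simp: Mt_def)
    have fp: "finite p" by (rule ispart_finite[OF ip fin])
    have "card {I \<in> p. odd (card I)} = 0" using Mt_parity[OF p fin] ev by simp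
    then have e: "{I \<in> p. odd (card I)} = {}" using fp by simp
    have "card I = 2" if I: "I \<in> p" for I
    proof -
      have "I \<noteq> {}" "finite I" using ip I fin by (auto simp: ispart_def intro: finite_subset)
      then have "card I \<ge> 1" by (simp add: Suc_le_eq card_gt_0_iff)
      moreover have "even (card I)" using e I by blast
      moreover have "card I \<le> 2" using le I by simp
      ultimately show ?thesis by presburger
    qed
    then show "p \<in> PM S" using ip by (simp add: PM_def)
  qed
  show "PM S \<subseteq> Mt S"
  proof
    fix p assume p: "p \<in> PM S"
    then have e: "{I \<in> p. odd (card I)} = {}" by (auto simp: PM_def)
    have "card {I \<in> p. odd (card I)} \<le> 1" unfolding e by simp
    then show "p \<in> Mt S" using p by (simp add: Mt_def PM_def)
  qed
qed

lemma Mt_odd: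
  assumes fin: "finite S" and od: "odd (card S)"
  shows "Mt S = (\<Union>a\<in>S. insert {a} ` PM (S - {a}))"
proof
  show "Mt S \<subseteq> (\<Union>a\<in>S. insert {a} ` PM (S - {a}))"
  proof
    fix p assume p: "p \<in> Mt S"
    have ip: "ispart S p" and le: "\<forall>I\<in>p. card I \<le> 2" and c1: "card {I \<in> p. odd (card I)} \<le> 1"
      using p by (auto simp: Mt_def)
    have fp: "finite p" by (rule ispart_finite[OF ip fin])
    have "card {I \<in> p. odd (card I)} \<noteq> 0" using Mt_parity[OF p fin] od by simp
    then have "card {I \<in> p. odd (card I)} = 1" using c1 by simp
    then obtain B where O: "{I \<in> p. odd (card I)} = {B}" by (rule card_1_singletonE)
    then have B: "B \<in> p" "odd (card B)" by auto
    have "card B \<le> 2" using le B by simp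
    then have "card B = 1" using B(2) by presburger
    then obtain a where a: "B = {a}" by (rule card_1_singletonE)
    have aS: "a \<in> S" using ip B(1) a by (auto simp: ispart_def)
    define p' where "p' = p - {{a}}"
    have pp: "p = insert {a} p'" using B(1) a by (auto simp: p'_def)
    have c2: "card I = 2" if I: "I \<in> p'" for I
    proof -
      have Ip: "I \<in> p" "I \<noteq> {a}" using I by (auto simp: p'_def)
      have "I \<noteq> {}" "finite I" using ip Ip fin by (auto simp: ispart_def intro: finite_subset)
      then have "card I \<ge> 1" by (simp add: Suc_le_eq card_gt_0_iff)
      moreover have "even (card I)" using O Ip a by blast
      moreover have "card I \<le> 2" using le Ip by simp
      ultimately show ?thesis by presburger
    qed
    have "ispart (S - {a}) p'"
    proof -
      have dj: "{a} \<inter> I = {}" if I: "I \<in> p'" for I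
      proof -
        have Ip: "I \<in> p" "I \<noteq> {a}" using I by (auto simp: p'_def)
        have dj0: "\<forall>I\<in>p. \<forall>J\<in>p. I \<noteq> J \<longrightarrow> I \<inter> J = {}" using ip by (simp add: ispart_def)
        have "{a} \<in> p" using B(1) a by simp
        then show ?thesis using dj0[rule_format, of "{a}" I] Ip by auto
      qed
      have "\<Union>p' = S - {a}"
      proof
        show "\<Union>p' \<subseteq> S - {a}" using ip dj by (auto simp: ispart_def p'_def)
        show "S - {a} \<subseteq> \<Union>p'"
        proof
          fix z assume z: "z \<in> S - {a}"
          then obtain C where "C \<in> p" "z \<in> C" using ip by (auto simp: ispart_def)
          then show "z \<in> \<Union>p'" using z by (auto simp: p'_def)
        qed
      qed
      then show ?thesis using ip by (auto simp: ispart_def p'_def)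
    qed
    then have "p' \<in> PM (S - {a})" using c2 by (simp add: PM_def)
    then show "p \<in> (\<Union>a\<in>S. insert {a} ` PM (S - {a}))" using pp aS by blast
  qed
  show "(\<Union>a\<in>S. insert {a} ` PM (S - {a})) \<subseteq> Mt S"
  proof
    fix p assume "p \<in> (\<Union>a\<in>S. insert {a} ` PM (S - {a}))"
    then obtain a p' where a: "a \<in> S" and p': "p' \<in> PM (S - {a})" and p: "p = insert {a} p'" by blast
    have ip': "ispart (S - {a}) p'" and c2: "\<forall>I\<in>p'. card I = 2" using p' by (auto simp: PM_def)
    have sub: "I \<subseteq> S - {a}" if "I \<in> p'" for I using ip' that by (auto simp: ispart_def)
    have ip: "ispart S p"
      unfolding ispart_def p
    proof (intro conjI ballI impI)
      fix I assume "I \<in> insert {a} p'" then show "I \<noteq> {}" using ip' by (auto simp: ispart_def)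
    next
      fix I J assume I: "I \<in> insert {a} p'" and J: "J \<in> insert {a} p'" and IJ: "I \<noteq> J"
      show "I \<inter> J = {}"
      proof (cases "I = {a}")
        case True then have "J \<in> p'" using J IJ by auto
        then show ?thesis using sub[of J] True by auto
      next
        case F: False then have Ip: "I \<in> p'" using I by auto
        show ?thesis
        proof (cases "J = {a}")
          case True then show ?thesis using sub[OF Ip] by auto
        next
          case False then have "J \<in> p'" using J by auto
          then show ?thesis using ip' Ip IJ by (auto simp: ispart_def)
        qed
      qed
    next
      show "\<Union>(insert {a} p') = S" using ip' a by (auto simp: ispart_def)
    qed
    have "{I \<in> p. odd (card I)} = {{a}}" using c2 p by auto
    then have "card {I \<in> p. odd (card I)} \<le> 1" by simp
    moreover have "\<forall>I\<in>p. card I \<le> 2" using c2 p by auto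
    ultimately show "p \<in> Mt S" using ip by (simp add: Mt_def)
  qed
qed

lemma c_part_PM: "p \<in> PM S \<Longrightarrow> c_part p lam = (\<Prod>B\<in>p. cc2 lam (Min B) (Max B))"
  unfolding c_part_def by (rule prod.cong) (auto simp: PM_def c_blk_def cc2_def)

lemma Hf_expand: "finite S \<Longrightarrow> Hf lam S = W0 (cc2 lam) S + (\<Sum>a\<in>S. (-1) ^ card {z \<in> S. a < z} * (- qf lam a) * W0 (cc2 lam) (S - {a}))"
  unfolding Hf_def by (rule conv_lin_right)

lemma RHS_general:
  assumes fin: "finite S"
  shows "(-1) ^ card S * (\<Sum>p\<in>Mt S. sgnP p * c_part p lam) = Hf lam S"
proof (cases "even (card S)")
  case ev: True
  have "(\<Sum>p\<in>Mt S. sgnP p * c_part p lam) = (\<Sum>p\<in>PM S. sgnP p * (\<Prod>B\<in>p. cc2 lam (Min B) (Max B)))"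
    unfolding Mt_even[OF fin ev] by (rule sum.cong[OF refl]) (simp add: c_part_PM)
  also have "\<dots> = W0 (cc2 lam) S" by (rule PM_W0[OF fin])
  finally have l: "(\<Sum>p\<in>Mt S. sgnP p * c_part p lam) = W0 (cc2 lam) S" .
  have z: "W0 (cc2 lam) (S - {a}) = 0" if a: "a \<in> S" for a
  proof -
    have "card (S - {a}) = card S - 1" "card S > 0" using a fin by (auto simp: card_gt_0_iff)
    then have "odd (card (S - {a}))" using ev by (cases "card S") auto
    then show ?thesis using W0_even[of "cc2 lam" "S - {a}"] by auto
  qed
  have "Hf lam S = W0 (cc2 lam) S" unfolding Hf_expand[OF fin] using z by simp
  then show ?thesis using l ev by simp
next
  case od: False
  let ?F = "\<lambda>p. sgnP p * c_part p lam"
  have inj: "inj_on (insert {a}) (PM (S - {a}))" for a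
  proof (rule inj_onI)
    fix p q assume p: "p \<in> PM (S - {a})" and q: "q \<in> PM (S - {a})" and e: "insert {a} p = insert {a} q"
    have "{a} \<notin> p" using p by (auto simp: PM_def)
    moreover have "{a} \<notin> q" using q by (auto simp: PM_def)
    ultimately show "p = q" using e by (metis insert_ident)
  qed
  have "(\<Sum>p\<in>Mt S. ?F p) = (\<Sum>a\<in>S. \<Sum>p\<in>insert {a} ` PM (S - {a}). ?F p)"
    unfolding Mt_odd[OF fin od]
  proof (rule sum.UNION_disjoint)
    show "finite S" by (rule fin)
    show "\<forall>a\<in>S. finite (insert {a} ` PM (S - {a}))" using fin by (auto intro: PM_finite)
    show "\<forall>a\<in>S. \<forall>b\<in>S. a \<noteq> b \<longrightarrow> insert {a} ` PM (S - {a}) \<inter> insert {b} ` PM (S - {b}) = {}"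
    proof (intro ballI impI)
      fix a b assume a: "a \<in> S" and b: "b \<in> S" and ab: "a \<noteq> b"
      show "insert {a} ` PM (S - {a}) \<inter> insert {b} ` PM (S - {b}) = {}"
      proof (rule ccontr)
        assume "insert {a} ` PM (S - {a}) \<inter> insert {b} ` PM (S - {b}) \<noteq> {}"
        then obtain p q where p: "p \<in> PM (S - {a})" and q: "q \<in> PM (S - {b})" and e: "insert {a} p = insert {b} q"
          by blast
        have "{a} \<in> insert {b} q" using e by blast
        then have "{a} \<in> q" using ab by auto
        then show False using q by (auto simp: PM_def)
      qed
    qed
  qed
  also have "\<dots> = (\<Sum>a\<in>S. \<Sum>p\<in>PM (S - {a}). ?F (insert {a} p))"
    by (rule sum.cong[OF refl]) (simp add: sum.reindex[OF inj])
  also have "\<dots> = (\<Sum>a\<in>S. (-1) ^ card {z \<in> S. a < z} * qf lam a * W0 (cc2 lam) (S - {a}))"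
  proof (rule sum.cong[OF refl])
    fix a assume a: "a \<in> S"
    have fV: "finite (S - {a})" using fin by simp
    have evV: "even (card (S - {a}))" using a fin od by (simp add: card_gt_0_iff)
    have sgn: "sg {a} (S - {a}) = (-1) ^ card {z \<in> S. a < z}"
    proof -
      have c: "card (S - {a}) = card {b \<in> S - {a}. b < a} + card {b \<in> S - {a}. a < b}"
        by (rule card_lt_gt) (use fV in auto)
      have e: "{b \<in> S - {a}. a < b} = {z \<in> S. a < z}" by auto
      have "even (card {b \<in> S - {a}. b < a} + card {z \<in> S. a < z})" using evV c e by simp
      then have "(-1::int) ^ card {b \<in> S - {a}. b < a} = (-1) ^ card {z \<in> S. a < z}" by (rule neg1_eq)
      then show ?thesis by (simp add: sg_single1)
    qed
    have "(\<Sum>p\<in>PM (S - {a}). ?F (insert {a} p)) = (\<Sum>p\<in>PM (S - {a}). (-1) ^ card {z \<in> S. a < z} * qf lam a * (sgnP p * (\<Prod>B\<in>p. cc2 lam (Min B) (Max B))))"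
    proof (rule sum.cong[OF refl])
      fix p assume p: "p \<in> PM (S - {a})"
      have fp: "finite p" using PM_elem_finite[OF p fV] .
      have nB: "{a} \<notin> p" using p by (auto simp: PM_def)
      have up: "\<Union>p = S - {a}" using p by (simp add: PM_def ispart_def)
      have ins: "insert {a} p \<in> Mt S" unfolding Mt_odd[OF fin od] using a p by blast
      have g: "goodp (insert {a} p)"
      proof (rule goodp_PM_ins[of S])
        show "ispart S (insert {a} p)" using ins by (simp add: Mt_def)
        show "\<forall>I\<in>insert {a} p. card I = 2 \<or> card I = 1" using p by (auto simp: PM_def)
        show "card {I \<in> insert {a} p. odd (card I)} \<le> 1" using ins by (simp add: Mt_def)
        show "finite {I \<in> insert {a} p. odd (card I)}" using fp by simp
      qed
      have sp: "sgnP (insert {a} p) = sg {a} (S - {a}) * sgnP p" using sgnP_insert[OF fp nB g] up by simp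
      have cp: "c_part (insert {a} p) lam = qf lam a * c_part p lam"
        using fp nB by (simp add: c_part_def c_blk_def qf_def)
      show "?F (insert {a} p) = (-1) ^ card {z \<in> S. a < z} * qf lam a * (sgnP p * (\<Prod>B\<in>p. cc2 lam (Min B) (Max B)))"
        unfolding sp cp sgn c_part_PM[OF p] by (simp add: algebra_simps)
    qed
    also have "\<dots> = (-1) ^ card {z \<in> S. a < z} * qf lam a * W0 (cc2 lam) (S - {a})"
      by (simp add: sum_distrib_left[symmetric] PM_W0[OF fV])
    finally show "(\<Sum>p\<in>PM (S - {a}). ?F (insert {a} p)) = (-1) ^ card {z \<in> S. a < z} * qf lam a * W0 (cc2 lam) (S - {a})" .
  qed
  finally have l: "(\<Sum>p\<in>Mt S. ?F p) = (\<Sum>a\<in>S. (-1) ^ card {z \<in> S. a < z} * qf lam a * W0 (cc2 lam) (S - {a}))" .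
  have w: "W0 (cc2 lam) S = 0" using W0_even[of "cc2 lam" S] od by auto
  have "Hf lam S = - (\<Sum>a\<in>S. (-1) ^ card {z \<in> S. a < z} * qf lam a * W0 (cc2 lam) (S - {a}))"
    unfolding Hf_expand[OF fin] w by (simp add: sum_negf)
  then show ?thesis using l od by simp
qed

lemma eps_part_sgnP:
  assumes p: "p \<in> Mt {1..n}"
  shows "eps_part n p = sgnP p"
proof -
  have ip: "ispart {1..n} p" using p by (simp add: Mt_def)
  have fp: "finite p" by (rule ispart_finite[OF ip]) simp
  define Ps where "Ps = (SOME Ps. distinct Ps \<and> set Ps = p)"
  have Ps: "distinct Ps" "set Ps = p" using some_list[OF fp] by (auto simp: Ps_def)
  have ne: "\<forall>I\<in>p. I \<noteq> {}" and dj: "\<forall>I\<in>p. \<forall>J\<in>p. I \<noteq> J \<longrightarrow> I \<inter> J = {}" and un: "\<Union>p = {1..n}"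
    using ip by (simp_all add: ispart_def)
  have "opart {1..n} Ps"
    unfolding opart_def
  proof (intro conjI allI impI ballI)
    fix I assume "I \<in> set Ps" then show "I \<noteq> {}" using ne Ps(2) by auto
  next
    fix i j assume i: "i < length Ps" and j: "j < length Ps" and ij: "i \<noteq> j"
    have "Ps ! i \<noteq> Ps ! j" using nth_eq_iff_index_eq[OF Ps(1) i j] ij by simp
    moreover have "Ps ! i \<in> p" "Ps ! j \<in> p" using i j Ps(2) by auto
    ultimately show "Ps ! i \<inter> Ps ! j = {}" using dj by blast
  next
    show "\<Union>(set Ps) = {1..n}" using un Ps(2) by simp
  qed
  then have "eps_ord n Ps = sgnL Ps" by (rule eps_ord_sgnL)
  then show ?thesis by (simp add: eps_part_def sgnP_def Ps_def)
qed

theorem proposition7p4: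
  fixes n :: nat and lam :: "nat \<Rightarrow> real"
  shows "(\<Sum>P\<in>P_ord n lam. (-1) ^ length P * eps_ord n P * eps' (set P))
       = (-1) ^ n * (\<Sum>p\<in>P0_le2 n. eps_part n p * c_part p lam)"
proof -
  have L: "(\<Sum>P\<in>P_ord n lam. (-1) ^ length P * eps_ord n P * eps' (set P)) = Fs lam {1..n}"
    unfolding P_ord_OPpos Fs_def
    by (rule sum.cong[OF refl]) (simp add: eps_ord_sgnL OPpos_def)
  have R: "(\<Sum>p\<in>P0_le2 n. eps_part n p * c_part p lam) = (\<Sum>p\<in>Mt {1..n}. sgnP p * c_part p lam)"
    unfolding P0_le2_Mt by (rule sum.cong[OF refl]) (simp add: eps_part_sgnP)
  have "(-1) ^ n * (\<Sum>p\<in>P0_le2 n. eps_part n p * c_part p lam) = Hf lam {1..n}"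
    unfolding R using RHS_general[of "{1..n}" lam] by simp
  also have "\<dots> = Fs lam {1..n}" by (rule Fs_Hf[symmetric]) simp
  finally show ?thesis using L by simp
qed

end
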